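(* Let $S$ be a stable subset of a stable $L^0$-module equipped with a stable topology $\mathscr T$. The following are equivalent: (i) $S$ is stable compact; (ii) every stable ultrafilter on $S$ has a cluster point in $S$; (iii) for every stable collection $\mathscr O$ of stable open sets with $S=\bigcup\mathscr O$ there is a stable finite subcollection $\tilde{\mathscr O}\subset\mathscr O$ with $S=\bigcup\tilde{\mathscr O}$; (iv) every stable collection $\mathscr C$ of stable closed subsets of $S$ such that $\bigcap\tilde{\mathscr C}\neq\emptyset$ for every stable finite subcollection $\tilde{\mathscr C}\subset\mathscr C$ satisfies $\bigcap\mathscr C\neq\emptyset$.
   Context: $L^0$ is the ring of real measurable functions on a probability space $(\Omega,\mathcal F,\mathbb P)$ modulo a.e. equality. An $L^0$-module $E$ is stable if for every countable measurable partition $(A_k)$ of $\Omega$ and $(x_k)\subset E$ there is a unique $x=\sum_k1_{A_k}x_k$ with $1_{A_k}x=1_{A_k}x_k$ for all $k$. A nonempty $S\subset E$ is stable if it contains all such concatenations of its elements. For stable sets $Y_k$, $\sum_k1_{A_k}Y_k:=\{\sum_k1_{A_k}y_k:y_k\in Y_k\}$; a nonempty collection of stable sets is stable if it is closed under this operation. For a nonempty collection $\mathscr X$ of stable sets, $\mathrm{st}(\mathscr X)=\{\sum_j1_{B_j}U_j:U_j\in\mathscr X,(B_j)\text{ countable measurable partition}\}$; a subcollection $\tilde{\mathscr O}$ of a stable collection $\mathscr O$ is stable finite if $\tilde{\mathscr O}=\{\sum_k1_{A_k}V_k:V_k\in\mathrm{st}(\mathscr O_k)\}$ for a countable measurable partition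 $(A_k)$ and finite nonempty $\mathscr O_k\subset\mathscr O$. A topology on $S$ is stable if it has a base which is a stable collection of stable sets. A filter on $S$ is stable if it has a filter base which is a stable collection of stable sets; a stable ultrafilter is a maximal stable filter. $S$ is stable compact if every stable filter on $S$ has a cluster point in $S$. *)

theory Defs
  imports "HOL-Probability.Probability"
begin

text \<open>Elements of L0 are represented by real-valued measurable functions on the
probability space M; scalar multiplication must respect a.e. equality, so that it
descends to the quotient ring L0.\<close>

definition L0 :: "'w measure \<Rightarrow> ('w \<Rightarrow> real) set" where
  "L0 M = borel_measurable M"

definition L0_module ::
  "'w measure \<Rightarrow> 'e set \<Rightarrow> 'e \<Rightarrow> ('e \<Rightarrow> 'e \<Rightarrow> 'e) \<Rightarrow> (('w \<Rightarrow> real) \<Rightarrow> 'e \<Rightarrow> 'e) \<Rightarrow> bool" where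
  "L0_module M E zero add smul \<longleftrightarrow>
     zero \<in> E \<and> (\<forall>x\<in>E. \<forall>y\<in>E. add x y \<in> E) \<and> (\<forall>f\<in>L0 M. \<forall>x\<in>E. smul f x \<in> E) \<and>
     (\<forall>x\<in>E. \<forall>y\<in>E. \<forall>z\<in>E. add (add x y) z = add x (add y z)) \<and>
     (\<forall>x\<in>E. \<forall>y\<in>E. add x y = add y x) \<and>
     (\<forall>x\<in>E. add zero x = x) \<and>
     (\<forall>x\<in>E. \<exists>y\<in>E. add x y = zero) \<and>
     (\<forall>f\<in>L0 M. \<forall>x\<in>E. \<forall>y\<in>E. smul f (add x y) = add (smul f x) (smul f y)) \<and>
     (\<forall>f\<in>L0 M. \<forall>g\<in>L0 M. \<forall>x\<in>E. smul (\<lambda>w. f w + g w) x = add (smul f x) (smul g x)) \<and>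
     (\<forall>f\<in>L0 M. \<forall>g\<in>L0 M. \<forall>x\<in>E. smul (\<lambda>w. f w * g w) x = smul f (smul g x)) \<and>
     (\<forall>x\<in>E. smul (\<lambda>w. 1) x = x) \<and>
     (\<forall>f\<in>L0 M. \<forall>g\<in>L0 M. \<forall>x\<in>E. (AE w in M. f w = g w) \<longrightarrow> smul f x = smul g x)"

text \<open>Countable measurable partitions, indexed by nat (finite partitions are
included by allowing empty members).\<close>

definition meas_partition :: "'w measure \<Rightarrow> (nat \<Rightarrow> 'w set) \<Rightarrow> bool" where
  "meas_partition M A \<longleftrightarrow>
     (\<forall>k. A k \<in> sets M) \<and> disjoint_family A \<and> (\<Union>k. A k) = space M"

definition stable_module ::
  "'w measure \<Rightarrow> 'e set \<Rightarrow> 'e \<Rightarrow> ('e \<Rightarrow> 'e \<Rightarrow> 'e) \<Rightarrow> (('w \<Rightarrow> real) \<Rightarrow> 'e \<Rightarrow> 'e) \<Rightarrow> bool" where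
  "stable_module M E zero add smul \<longleftrightarrow> L0_module M E zero add smul \<and>
     (\<forall>A xs. meas_partition M A \<and> (\<forall>k. xs k \<in> E) \<longrightarrow>
        (\<exists>!x. x \<in> E \<and> (\<forall>k. smul (indicator (A k)) x = smul (indicator (A k)) (xs k))))"

text \<open>The concatenation sum_k 1_{A_k} x_k.\<close>

definition conc :: "'e set \<Rightarrow> (('w \<Rightarrow> real) \<Rightarrow> 'e \<Rightarrow> 'e) \<Rightarrow> (nat \<Rightarrow> 'w set) \<Rightarrow> (nat \<Rightarrow> 'e) \<Rightarrow> 'e" where
  "conc E smul A xs =
     (THE x. x \<in> E \<and> (\<forall>k. smul (indicator (A k)) x = smul (indicator (A k)) (xs k)))"

definition stable_set :: "'w measure \<Rightarrow> 'e set \<Rightarrow> (('w \<Rightarrow> real) \<Rightarrow> 'e \<Rightarrow> 'e) \<Rightarrow> 'e set \<Rightarrow> bool" where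
  "stable_set M E smul S \<longleftrightarrow> S \<noteq> {} \<and> S \<subseteq> E \<and>
     (\<forall>A xs. meas_partition M A \<and> (\<forall>k. xs k \<in> S) \<longrightarrow> conc E smul A xs \<in> S)"

definition conc_sets :: "'e set \<Rightarrow> (('w \<Rightarrow> real) \<Rightarrow> 'e \<Rightarrow> 'e) \<Rightarrow> (nat \<Rightarrow> 'w set) \<Rightarrow> (nat \<Rightarrow> 'e set) \<Rightarrow> 'e set" where
  "conc_sets E smul A Y = {conc E smul A ys | ys. \<forall>k. ys k \<in> Y k}"

definition stable_coll :: "'w measure \<Rightarrow> 'e set \<Rightarrow> (('w \<Rightarrow> real) \<Rightarrow> 'e \<Rightarrow> 'e) \<Rightarrow> 'e set set \<Rightarrow> bool" where
  "stable_coll M E smul \<X> \<longleftrightarrow> \<X> \<noteq> {} \<and> (\<forall>X\<in>\<X>. stable_set M E smul X) \<and>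
     (\<forall>A Y. meas_partition M A \<and> (\<forall>k. Y k \<in> \<X>) \<longrightarrow> conc_sets E smul A Y \<in> \<X>)"

definition st :: "'w measure \<Rightarrow> 'e set \<Rightarrow> (('w \<Rightarrow> real) \<Rightarrow> 'e \<Rightarrow> 'e) \<Rightarrow> 'e set set \<Rightarrow> 'e set set" where
  "st M E smul \<X> = {conc_sets E smul B U | B U. meas_partition M B \<and> (\<forall>j. U j \<in> \<X>)}"

definition stable_finite_sub ::
  "'w measure \<Rightarrow> 'e set \<Rightarrow> (('w \<Rightarrow> real) \<Rightarrow> 'e \<Rightarrow> 'e) \<Rightarrow> 'e set set \<Rightarrow> 'e set set \<Rightarrow> bool" where
  "stable_finite_sub M E smul \<O> \<O>' \<longleftrightarrow> \<O>' \<subseteq> \<O> \<and>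
     (\<exists>A Os. meas_partition M A \<and> (\<forall>k. finite (Os k) \<and> Os k \<noteq> {} \<and> Os k \<subseteq> \<O>) \<and>
        \<O>' = {conc_sets E smul A V | V. \<forall>k. V k \<in> st M E smul (Os k)})"

definition stable_topology ::
  "'w measure \<Rightarrow> 'e set \<Rightarrow> (('w \<Rightarrow> real) \<Rightarrow> 'e \<Rightarrow> 'e) \<Rightarrow> 'e topology \<Rightarrow> bool" where
  "stable_topology M E smul T \<longleftrightarrow>
     (\<exists>\<B>. stable_coll M E smul \<B> \<and> (\<forall>B\<in>\<B>. openin T B) \<and>
        (\<forall>U. openin T U \<longrightarrow> (\<exists>\<U>\<subseteq>\<B>. U = \<Union>\<U>)))"

definition filter_on :: "'e set \<Rightarrow> 'e set set \<Rightarrow> bool" where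
  "filter_on S \<F> \<longleftrightarrow> S \<in> \<F> \<and> {} \<notin> \<F> \<and> (\<forall>F\<in>\<F>. F \<subseteq> S) \<and>
     (\<forall>F\<in>\<F>. \<forall>G\<in>\<F>. F \<inter> G \<in> \<F>) \<and>
     (\<forall>F\<in>\<F>. \<forall>G. F \<subseteq> G \<and> G \<subseteq> S \<longrightarrow> G \<in> \<F>)"

definition filter_base :: "'e set set \<Rightarrow> 'e set set \<Rightarrow> bool" where
  "filter_base \<F> \<B> \<longleftrightarrow> \<B> \<subseteq> \<F> \<and> (\<forall>F\<in>\<F>. \<exists>B\<in>\<B>. B \<subseteq> F)"

definition stable_filter ::
  "'w measure \<Rightarrow> 'e set \<Rightarrow> (('w \<Rightarrow> real) \<Rightarrow> 'e \<Rightarrow> 'e) \<Rightarrow> 'e set \<Rightarrow> 'e set set \<Rightarrow> bool" where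
  "stable_filter M E smul S \<F> \<longleftrightarrow> filter_on S \<F> \<and>
     (\<exists>\<B>. stable_coll M E smul \<B> \<and> filter_base \<F> \<B>)"

definition stable_ultrafilter ::
  "'w measure \<Rightarrow> 'e set \<Rightarrow> (('w \<Rightarrow> real) \<Rightarrow> 'e \<Rightarrow> 'e) \<Rightarrow> 'e set \<Rightarrow> 'e set set \<Rightarrow> bool" where
  "stable_ultrafilter M E smul S \<F> \<longleftrightarrow> stable_filter M E smul S \<F> \<and>
     (\<forall>\<G>. stable_filter M E smul S \<G> \<and> \<F> \<subseteq> \<G> \<longrightarrow> \<G> = \<F>)"

definition cluster_point :: "'e topology \<Rightarrow> 'e set set \<Rightarrow> 'e \<Rightarrow> bool" where
  "cluster_point T \<F> x \<longleftrightarrow> x \<in> topspace T \<and>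
     (\<forall>U F. openin T U \<and> x \<in> U \<and> F \<in> \<F> \<longrightarrow> U \<inter> F \<noteq> {})"

definition stable_compact ::
  "'w measure \<Rightarrow> 'e set \<Rightarrow> (('w \<Rightarrow> real) \<Rightarrow> 'e \<Rightarrow> 'e) \<Rightarrow> 'e topology \<Rightarrow> 'e set \<Rightarrow> bool" where
  "stable_compact M E smul T S \<longleftrightarrow>
     (\<forall>\<F>. stable_filter M E smul S \<F> \<longrightarrow> (\<exists>x\<in>S. cluster_point T \<F> x))"

end

theory Submission
  imports Defs
begin


locale stabmod = prob_space M for M :: "'w measure" +
  fixes E :: "'e set" and zero :: 'e and add :: "'e \<Rightarrow> 'e \<Rightarrow> 'e" and smul :: "('w \<Rightarrow> real) \<Rightarrow> 'e \<Rightarrow> 'e"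
  assumes SM: "stable_module M E zero add smul"
begin

abbreviation R :: "'w set \<Rightarrow> 'e \<Rightarrow> 'e" where "R A x \<equiv> smul (indicator A) x"

definition eqon :: "'w set \<Rightarrow> 'e \<Rightarrow> 'e \<Rightarrow> bool" where
  "eqon D x y \<longleftrightarrow> R D x = R D y"

lemma MOD: "L0_module M E zero add smul" using SM unfolding stable_module_def by auto

lemma AX: "zero \<in> E" "(\<forall>x\<in>E. \<forall>y\<in>E. add x y \<in> E)" "(\<forall>f\<in>L0 M. \<forall>x\<in>E. smul f x \<in> E)"
     "(\<forall>x\<in>E. \<forall>y\<in>E. \<forall>z\<in>E. add (add x y) z = add x (add y z))"
     "(\<forall>x\<in>E. \<forall>y\<in>E. add x y = add y x)"
     "(\<forall>x\<in>E. add zero x = x)"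
     "(\<forall>x\<in>E. \<exists>y\<in>E. add x y = zero)"
     "(\<forall>f\<in>L0 M. \<forall>g\<in>L0 M. \<forall>x\<in>E. smul (\<lambda>w. f w + g w) x = add (smul f x) (smul g x))"
     "(\<forall>f\<in>L0 M. \<forall>g\<in>L0 M. \<forall>x\<in>E. smul (\<lambda>w. f w * g w) x = smul f (smul g x))"
     "(\<forall>x\<in>E. smul (\<lambda>w. 1) x = x)"
     "(\<forall>f\<in>L0 M. \<forall>g\<in>L0 M. \<forall>x\<in>E. (AE w in M. f w = g w) \<longrightarrow> smul f x = smul g x)"
  apply (insert MOD[unfolded L0_module_def]) by (elim conjE; assumption)+

lemma ind_L0: "A \<in> sets M \<Longrightarrow> indicator A \<in> L0 M"
  unfolding L0_def by simp

lemma ax_smulE: "f \<in> L0 M \<Longrightarrow> x \<in> E \<Longrightarrow> smul f x \<in> E"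
  using AX by blast
lemma ax_zeroE: "zero \<in> E" using AX by blast
lemma ax_addE: "x \<in> E \<Longrightarrow> y \<in> E \<Longrightarrow> add x y \<in> E" using AX by blast
lemma ax_assoc: "x \<in> E \<Longrightarrow> y \<in> E \<Longrightarrow> z \<in> E \<Longrightarrow> add (add x y) z = add x (add y z)"
  using AX by blast
lemma ax_comm: "x \<in> E \<Longrightarrow> y \<in> E \<Longrightarrow> add x y = add y x"
  using AX by blast
lemma ax_zero: "x \<in> E \<Longrightarrow> add zero x = x" using AX by blast
lemma ax_inv: "x \<in> E \<Longrightarrow> \<exists>y\<in>E. add x y = zero" using AX by blast
lemma ax_fadd: "f \<in> L0 M \<Longrightarrow> g \<in> L0 M \<Longrightarrow> x \<in> E \<Longrightarrow> smul (\<lambda>w. f w + g w) x = add (smul f x) (smul g x)"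
  using AX by blast
lemma ax_fmul: "f \<in> L0 M \<Longrightarrow> g \<in> L0 M \<Longrightarrow> x \<in> E \<Longrightarrow> smul (\<lambda>w. f w * g w) x = smul f (smul g x)"
  using AX by blast
lemma ax_one: "x \<in> E \<Longrightarrow> smul (\<lambda>w. 1) x = x" using AX by blast
lemma smul_AE: "f \<in> L0 M \<Longrightarrow> g \<in> L0 M \<Longrightarrow> x \<in> E \<Longrightarrow> (AE w in M. f w = g w) \<Longrightarrow> smul f x = smul g x"
  by (rule AX(11)[rule_format])

lemma R_in: "A \<in> sets M \<Longrightarrow> x \<in> E \<Longrightarrow> R A x \<in> E"
  using ax_smulE ind_L0 by blast

lemma smul_zero: assumes "x \<in> E" shows "smul (\<lambda>w. 0) x = zero"
proof -
  have L: "(\<lambda>w. 0::real) \<in> L0 M" unfolding L0_def by simp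
  have "smul (\<lambda>w. (\<lambda>w. 0) w + (\<lambda>w. 0) w) x = add (smul (\<lambda>w. 0) x) (smul (\<lambda>w. 0) x)"
    by (rule ax_fadd[OF L L assms])
  then have s: "smul (\<lambda>w. 0) x = add (smul (\<lambda>w. 0) x) (smul (\<lambda>w. 0) x)" by simp
  define s0 where "s0 = smul (\<lambda>w. 0) x"
  have s0E: "s0 \<in> E" using ax_smulE L assms unfolding s0_def by blast
  then obtain t where t: "t \<in> E" "add s0 t = zero" using ax_inv by blast
  have "zero = add s0 t" using t by simp
  also have "\<dots> = add (add s0 s0) t" using s s0_def by simp
  also have "\<dots> = add s0 (add s0 t)" using ax_assoc s0E t by blast
  also have "\<dots> = s0" using t ax_zero ax_comm s0E ax_zeroE by simp
  finally show ?thesis unfolding s0_def by simp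
qed

lemma R_space: "x \<in> E \<Longrightarrow> R (space M) x = x"
proof -
  assume x: "x \<in> E"
  have "R (space M) x = smul (\<lambda>w. 1) x"
    by (rule smul_AE[OF ind_L0[OF sets.top] _ x]) (auto simp: L0_def intro!: AE_I2)
  also have "\<dots> = x" using ax_one x by blast
  finally show ?thesis .
qed

lemma R_null: "A \<in> null_sets M \<Longrightarrow> x \<in> E \<Longrightarrow> R A x = zero"
proof -
  assume A: "A \<in> null_sets M" and x: "x \<in> E"
  have "R A x = smul (\<lambda>w. 0) x"
    using A by (intro smul_AE[OF ind_L0 _ x]) (auto simp: L0_def dest: AE_not_in)
  then show ?thesis using smul_zero x by simp
qed

lemma R_R: "A \<in> sets M \<Longrightarrow> B \<in> sets M \<Longrightarrow> x \<in> E \<Longrightarrow> R A (R B x) = R (A \<inter> B) x"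
proof -
  assume A: "A \<in> sets M" and B: "B \<in> sets M" and x: "x \<in> E"
  have "R A (R B x) = smul (\<lambda>w. indicator A w * indicator B w) x"
    using ax_fmul[OF ind_L0[OF A] ind_L0[OF B] x] by simp
  also have "(\<lambda>w. indicator A w * indicator B w) = (indicator (A \<inter> B) :: 'w \<Rightarrow> real)"
    by (auto simp: indicator_inter_arith)
  finally show ?thesis .
qed

lemma eqon_sub: "eqon D x y \<Longrightarrow> D' \<subseteq> D \<Longrightarrow> D \<in> sets M \<Longrightarrow> D' \<in> sets M \<Longrightarrow> x \<in> E \<Longrightarrow> y \<in> E \<Longrightarrow> eqon D' x y"
  unfolding eqon_def by (metis R_R Int_absorb2)

lemma eqon_null: "D \<in> null_sets M \<Longrightarrow> x \<in> E \<Longrightarrow> y \<in> E \<Longrightarrow> eqon D x y"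
  unfolding eqon_def using R_null by simp

lemma eqon_refl[simp]: "eqon D x x" unfolding eqon_def by simp
lemma eqon_sym: "eqon D x y \<Longrightarrow> eqon D y x" unfolding eqon_def by simp
lemma eqon_trans: "eqon D x y \<Longrightarrow> eqon D y z \<Longrightarrow> eqon D x z" unfolding eqon_def by simp

lemma glue_ex: "meas_partition M A \<Longrightarrow> (\<forall>k. xs k \<in> E) \<Longrightarrow>
   \<exists>!x. x \<in> E \<and> (\<forall>k. R (A k) x = R (A k) (xs k))"
  using SM unfolding stable_module_def by blast

lemma conc: assumes "meas_partition M A" "\<And>k. xs k \<in> E"
  shows "conc E smul A xs \<in> E" "\<And>k. eqon (A k) (conc E smul A xs) (xs k)"
proof -
  have "\<exists>!x. x \<in> E \<and> (\<forall>k. R (A k) x = R (A k) (xs k))" using glue_ex assms by blast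
  from theI'[OF this] show "conc E smul A xs \<in> E" "\<And>k. eqon (A k) (conc E smul A xs) (xs k)"
    unfolding conc_def eqon_def by blast+
qed

lemma uniq: assumes "meas_partition M A" "x \<in> E" "y \<in> E" "\<And>k. eqon (A k) x y" shows "x = y"
  using glue_ex[OF assms(1), of "\<lambda>k. y"] assms unfolding eqon_def by blast

lemma mp_sets: "meas_partition M A \<Longrightarrow> A k \<in> sets M" unfolding meas_partition_def by blast


end

context stabmod begin
definition seqpart :: "(nat \<Rightarrow> 'w set) \<Rightarrow> nat \<Rightarrow> 'w set" where
  "seqpart D n = (if n = 0 then space M - (\<Union>i. D i) else disjointed D (n - 1))"

lemma seqpart_0: "seqpart D 0 = space M - (\<Union>i. D i)" by (simp add: seqpart_def)
lemma seqpart_Suc: "seqpart D (Suc n) = disjointed D n" by (simp add: seqpart_def)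
lemma seqpart_sub: "seqpart D (Suc n) \<subseteq> D n" by (simp add: seqpart_Suc disjointed_subset)
lemma seqpart_UN: "(\<Union>n. seqpart D (Suc n)) = (\<Union>n. D n)" by (simp add: seqpart_Suc UN_disjointed_eq)

lemma seqpart_mp: assumes "\<And>i. D i \<in> sets M" shows "meas_partition M (seqpart D)"
proof -
  have rng: "range (disjointed D) \<subseteq> sets M" using assms by (intro sets.range_disjointed_sets) auto
  have s: "\<And>k. seqpart D k \<in> sets M"
    using rng assms by (auto simp: seqpart_def intro!: sets.Diff sets.countable_UN)
  have d: "disjoint_family (seqpart D)"
  proof (unfold disjoint_family_on_def, intro ballI impI)
    fix m n :: nat assume "m \<noteq> n"
    show "seqpart D m \<inter> seqpart D n = {}"
    proof (cases m; cases n)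
      fix m' n' assume "m = Suc m'" "n = Suc n'"
      then show ?thesis using disjoint_family_disjointed[of D] \<open>m \<noteq> n\<close>
        by (auto simp: seqpart_Suc disjoint_family_on_def)
    qed (use \<open>m \<noteq> n\<close> disjointed_subset[of D] in \<open>auto simp: seqpart_def\<close>)
  qed
  have u: "(\<Union>k. seqpart D k) = space M"
  proof
    show "(\<Union>k. seqpart D k) \<subseteq> space M" using s sets.sets_into_space by blast
    show "space M \<subseteq> (\<Union>k. seqpart D k)"
    proof
      fix w assume w: "w \<in> space M"
      show "w \<in> (\<Union>k. seqpart D k)"
      proof (cases "w \<in> (\<Union>i. D i)")
        case True then have "w \<in> (\<Union>n. seqpart D (Suc n))" by (simp add: seqpart_UN)
        then show ?thesis by blast
      next
        case False then show ?thesis using w by (auto simp: seqpart_0 intro!: exI[of _ 0])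
      qed
    qed
  qed
  show ?thesis using s d u unfolding meas_partition_def by blast
qed

lemma null_empty: "{} \<in> null_sets M" by simp

lemma eqon_UN: fixes D :: "nat \<Rightarrow> 'w set" assumes D: "\<And>n. D n \<in> sets M" and x: "x \<in> E" and y: "y \<in> E"
  and eq: "\<And>n. eqon (D n) x y" shows "eqon (\<Union>n. D n) x y"
proof -
  define U where "U = (\<Union>n. D n)"
  have U: "U \<in> sets M" unfolding U_def by (rule sets.countable_UN'') (simp_all add: D)
  have P: "meas_partition M (seqpart D)" by (rule seqpart_mp[OF D])
  have "R U x = R U y"
  proof (rule uniq[OF P R_in[OF U x] R_in[OF U y]])
    fix k
    have Pk: "seqpart D k \<in> sets M" using P mp_sets by blast
    show "eqon (seqpart D k) (R U x) (R U y)"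
    proof (cases k)
      case 0
      then have e: "seqpart D k \<inter> U = {}" by (auto simp: seqpart_0 U_def)
      have "R (seqpart D k) (R U x) = zero" using R_R[OF Pk U x] e R_null[OF null_empty x] by simp
      moreover have "R (seqpart D k) (R U y) = zero" using R_R[OF Pk U y] e R_null[OF null_empty y] by simp
      ultimately show ?thesis unfolding eqon_def by simp
    next
      case (Suc n)
      have sub: "seqpart D k \<subseteq> D n" using seqpart_sub[of D n] Suc by simp
      then have e: "seqpart D k \<inter> U = seqpart D k" unfolding U_def by blast
      have "eqon (seqpart D k) x y" by (rule eqon_sub[OF eq[of n] sub D Pk x y])
      then show ?thesis unfolding eqon_def using R_R[OF Pk U x] R_R[OF Pk U y] e by simp
    qed
  qed
  then show ?thesis unfolding eqon_def U_def .
qed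

lemma eqon_ae: assumes "eqon D x y" "D \<in> sets M" "D' \<in> sets M" "D' - D \<in> null_sets M" "x \<in> E" "y \<in> E"
  shows "eqon D' x y"
proof -
  define F where "F = (\<lambda>n::nat. if n = 0 then D' \<inter> D else D' - D)"
  have F: "\<And>n. F n \<in> sets M" using assms by (auto simp: F_def)
  have e1: "eqon (D' \<inter> D) x y" by (rule eqon_sub[OF assms(1)]) (use assms in auto)
  have e2: "eqon (D' - D) x y" by (rule eqon_null[OF assms(4,5,6)])
  have eF: "\<And>n. eqon (F n) x y" using e1 e2 by (simp add: F_def)
  have "eqon (\<Union>n. F n) x y" by (rule eqon_UN[of F, OF F assms(5,6) eF])
  moreover have "(\<Union>n. F n) = D'" unfolding F_def by (auto split: if_splits)
  ultimately show ?thesis by simp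
qed

lemma eq_of_eqon: assumes "eqon D x y" "D \<in> sets M" "space M - D \<in> null_sets M" "x \<in> E" "y \<in> E"
  shows "x = y"
  using eqon_ae[OF assms(1,2) sets.top assms(3,4,5)] R_space assms(4,5) unfolding eqon_def by metis

lemma conc_sets_char: assumes A: "meas_partition M A" and Y: "\<And>k. Y k \<subseteq> E"
  shows "conc_sets E smul A Y = {x\<in>E. \<forall>k. \<exists>y\<in>Y k. eqon (A k) x y}"
proof
  show "conc_sets E smul A Y \<subseteq> {x\<in>E. \<forall>k. \<exists>y\<in>Y k. eqon (A k) x y}"
  proof
    fix x assume "x \<in> conc_sets E smul A Y"
    then obtain ys where ys: "\<And>k. ys k \<in> Y k" and x: "x = conc E smul A ys" unfolding conc_sets_def by blast
    have ysE: "\<And>k. ys k \<in> E" using ys Y by blast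
    have "x \<in> E" using conc(1)[of A ys, OF A ysE] x by simp
    moreover have "\<forall>k. \<exists>y\<in>Y k. eqon (A k) x y"
    proof
      fix k show "\<exists>y\<in>Y k. eqon (A k) x y" using conc(2)[of A ys, OF A ysE, of k] x ys[of k] by blast
    qed
    ultimately show "x \<in> {x\<in>E. \<forall>k. \<exists>y\<in>Y k. eqon (A k) x y}" by blast
  qed
  show "{x\<in>E. \<forall>k. \<exists>y\<in>Y k. eqon (A k) x y} \<subseteq> conc_sets E smul A Y"
  proof
    fix x assume "x \<in> {x\<in>E. \<forall>k. \<exists>y\<in>Y k. eqon (A k) x y}"
    then have x: "x \<in> E" and ex: "\<forall>k. \<exists>y\<in>Y k. eqon (A k) x y" by auto
    from ex have "\<forall>k. \<exists>y. y \<in> Y k \<and> eqon (A k) x y" by blast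
    then have "\<exists>ys. \<forall>k. ys k \<in> Y k \<and> eqon (A k) x (ys k)" by (rule choice)
    then obtain ys where ys: "\<And>k. ys k \<in> Y k" "\<And>k. eqon (A k) x (ys k)" by blast
    have ysE: "\<And>k. ys k \<in> E" using ys Y by blast
    have "\<And>k. eqon (A k) x (conc E smul A ys)"
    proof -
      fix k show "eqon (A k) x (conc E smul A ys)"
        using ys(2)[of k] conc(2)[of A ys, OF A ysE, of k] unfolding eqon_def by simp
    qed
    then have "x = conc E smul A ys" by (rule uniq[OF A x conc(1)[of A ys, OF A ysE]])
    then show "x \<in> conc_sets E smul A Y" unfolding conc_sets_def using ys by blast
  qed
qed

lemma stable_conc: "stable_set M E smul V \<Longrightarrow> meas_partition M A \<Longrightarrow> (\<And>k. xs k \<in> V) \<Longrightarrow> conc E smul A xs \<in> V"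
  unfolding stable_set_def by blast

lemma stable_sub: "stable_set M E smul V \<Longrightarrow> V \<subseteq> E" unfolding stable_set_def by blast
lemma stable_ne: "stable_set M E smul V \<Longrightarrow> V \<noteq> {}" unfolding stable_set_def by blast

lemma locality: assumes V: "stable_set M E smul V" and A: "meas_partition M A" and x: "x \<in> E"
  and l: "\<And>k. \<exists>v\<in>V. eqon (A k) x v" shows "x \<in> V"
proof -
  have "x \<in> conc_sets E smul A (\<lambda>_. V)" by (subst conc_sets_char[OF A stable_sub[OF V]]) (use x l in auto)
  then obtain ys where ys: "\<And>k. ys k \<in> V" and xe: "x = conc E smul A ys" unfolding conc_sets_def by blast
  show ?thesis using stable_conc[of V A ys, OF V A ys] xe by simp
qed

lemma conc_sets_const: assumes V: "stable_set M E smul V" and A: "meas_partition M A"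
  shows "conc_sets E smul A (\<lambda>_. V) = V"
proof -
  have VE: "\<And>x. x \<in> V \<Longrightarrow> x \<in> E" using stable_sub[OF V] by blast
  have "{x\<in>E. \<forall>k. \<exists>y\<in>V. eqon (A k) x y} = V"
  proof
    show "{x\<in>E. \<forall>k. \<exists>y\<in>V. eqon (A k) x y} \<subseteq> V" using locality[OF V A] by blast
    show "V \<subseteq> {x\<in>E. \<forall>k. \<exists>y\<in>V. eqon (A k) x y}" using VE eqon_refl by blast
  qed
  then show ?thesis by (subst conc_sets_char[OF A stable_sub[OF V]])
qed

definition inloc :: "'w set \<Rightarrow> 'e \<Rightarrow> 'e set \<Rightarrow> bool" where
  "inloc D x V \<longleftrightarrow> (\<exists>v\<in>V. eqon D x v)"

lemma inloc_UN: fixes D :: "nat \<Rightarrow> 'w set" assumes V: "stable_set M E smul V" and D: "\<And>n. D n \<in> sets M" and x: "x \<in> E"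
  and l: "\<And>n. inloc (D n) x V" shows "inloc (\<Union>n. D n) x V"
proof -
  obtain vs where vs: "\<And>n. vs n \<in> V" "\<And>n. eqon (D n) x (vs n)" using l unfolding inloc_def by metis
  obtain v0 where v0: "v0 \<in> V" using stable_ne[OF V] by blast
  define ws where "ws = (\<lambda>n. if n = 0 then v0 else vs (n - 1))"
  have ws: "\<And>n. ws n \<in> V" using vs v0 by (simp add: ws_def)
  have wsE: "\<And>n. ws n \<in> E" using ws stable_sub[OF V] by blast
  have P: "meas_partition M (seqpart D)" by (rule seqpart_mp[OF D])
  define w where "w = conc E smul (seqpart D) ws"
  have w: "w \<in> V" using stable_conc[of V "seqpart D" ws, OF V P ws] w_def by simp
  have wE: "w \<in> E" using w stable_sub[OF V] by blast
  have Ps: "\<And>k. seqpart D k \<in> sets M" using P mp_sets by blast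
  have eS: "\<And>n. eqon (seqpart D (Suc n)) x w"
  proof -
    fix n
    have vsE: "vs n \<in> E" using vs(1) stable_sub[OF V] by blast
    have "eqon (seqpart D (Suc n)) x (vs n)" by (rule eqon_sub[OF vs(2)[of n] seqpart_sub[of D n] D[of n] Ps[of "Suc n"] x vsE])
    moreover have "eqon (seqpart D (Suc n)) w (vs n)" using conc(2)[of "seqpart D" ws, OF P wsE, of "Suc n"] w_def ws_def by simp
    ultimately show "eqon (seqpart D (Suc n)) x w" unfolding eqon_def by simp
  qed
  have "eqon (\<Union>n. seqpart D (Suc n)) x w" by (rule eqon_UN[of "\<lambda>n. seqpart D (Suc n)", OF Ps x wE eS])
  then show ?thesis unfolding inloc_def seqpart_UN using w by blast
qed

lemma exhaust: assumes sub: "\<F> \<subseteq> sets M" and ne: "\<F> \<noteq> {}"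
  and un: "\<And>D::nat\<Rightarrow>'w set. (\<And>n. D n \<in> \<F>) \<Longrightarrow> (\<Union>n. D n) \<in> \<F>"
  shows "\<exists>H\<in>\<F>. \<forall>D\<in>\<F>. D - H \<in> null_sets M"
proof -
  define s where "s = (SUP D\<in>\<F>. measure M D)"
  have bdd: "bdd_above (measure M ` \<F>)" by (auto intro!: bdd_aboveI[of _ 1])
  have le: "\<And>D. D \<in> \<F> \<Longrightarrow> measure M D \<le> s" unfolding s_def using bdd by (auto intro: cSUP_upper)
  have "\<forall>n::nat. \<exists>D\<in>\<F>. s - 1 / (real n + 1) < measure M D"
  proof
    fix n :: nat
    have "s - 1 / (real n + 1) < s" by simp
    then show "\<exists>D\<in>\<F>. s - 1 / (real n + 1) < measure M D" unfolding s_def using ne bdd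
      by (simp add: less_cSUP_iff)
  qed
  then obtain D where D: "\<And>n. D n \<in> \<F>" "\<And>n. s - 1 / (real n + 1) < measure M (D n)" by metis
  define H where "H = (\<Union>n. D n)"
  have H: "H \<in> \<F>" using un D H_def by blast
  have Hs: "H \<in> sets M" using H sub by blast
  have mH: "measure M H = s"
  proof (rule antisym)
    show "measure M H \<le> s" using le H .
    show "s \<le> measure M H"
    proof (rule field_le_epsilon)
      fix e :: real assume e: "0 < e"
      obtain n :: nat where n: "1 / (real n + 1) < e"
        using e by (metis nat_approx_posE of_nat_Suc add.commute)
      have "measure M (D n) \<le> measure M H"
        using D(1) sub Hs by (intro finite_measure_mono) (auto simp: H_def)
      then show "s \<le> measure M H + e" using D(2)[of n] n by linarith
    qed
  qed
  show ?thesis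
  proof (intro bexI[OF _ H] ballI)
    fix G assume G: "G \<in> \<F>"
    have Gs: "G \<in> sets M" using G sub by blast
    define F where "F = (\<lambda>n::nat. if n = 0 then G else H)"
    have "\<And>n. F n \<in> \<F>" using G H by (simp add: F_def)
    then have "(\<Union>n. F n) \<in> \<F>" by (rule un)
    moreover have "(\<Union>n. F n) = G \<union> H" unfolding F_def by (auto split: if_splits)
    ultimately have "measure M (G \<union> H) \<le> s" using le by simp
    moreover have "measure M (G \<union> H) = measure M H + measure M (G - H)"
      using Gs Hs by (subst finite_measure_Union[symmetric]) (auto intro!: arg_cong[where f="measure M"])
    ultimately have "measure M (G - H) \<le> 0" using mH by simp
    then have "measure M (G - H) = 0" using measure_nonneg[of M "G - H"] by linarith
    then show "G - H \<in> null_sets M" using Gs Hs by (intro null_setsI) (auto simp: emeasure_eq_measure)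
  qed
qed
end

context stabmod begin

lemma conc_sets_mono: "(\<And>k. Y k \<subseteq> Y' k) \<Longrightarrow> conc_sets E smul A Y \<subseteq> conc_sets E smul A Y'"
  unfolding conc_sets_def by blast

lemma eqon_empty: "x \<in> E \<Longrightarrow> y \<in> E \<Longrightarrow> eqon {} x y"
  by (rule eqon_null[OF null_empty])

lemma conc_sets_char2:
  assumes A: "meas_partition M A" and B: "\<And>k. meas_partition M (B k)" and Y: "\<And>k j. Y k j \<subseteq> E"
  shows "conc_sets E smul A (\<lambda>k. conc_sets E smul (B k) (Y k)) =
         {x\<in>E. \<forall>k j. \<exists>y\<in>Y k j. eqon (A k \<inter> B k j) x y}"
proof -
  have cB: "conc_sets E smul (B k) (Y k) = {x\<in>E. \<forall>j. \<exists>y\<in>Y k j. eqon (B k j) x y}" for k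
    by (rule conc_sets_char[of "B k" "Y k", OF B Y])
  have cBE: "\<And>k. conc_sets E smul (B k) (Y k) \<subseteq> E" using cB by blast
  have Ak: "\<And>k. A k \<in> sets M" using mp_sets[OF A] .
  have Bk: "\<And>k j. B k j \<in> sets M" using mp_sets[OF B] .
  show ?thesis
  proof (subst conc_sets_char[OF A cBE], intro set_eqI iffI)
    fix x assume "x \<in> {x\<in>E. \<forall>k. \<exists>y\<in>conc_sets E smul (B k) (Y k). eqon (A k) x y}"
    then have x: "x \<in> E" and h: "\<And>k. \<exists>w\<in>conc_sets E smul (B k) (Y k). eqon (A k) x w" by auto
    have "\<forall>k j. \<exists>y\<in>Y k j. eqon (A k \<inter> B k j) x y"
    proof (intro allI)
      fix k j
      obtain w where w: "w \<in> conc_sets E smul (B k) (Y k)" "eqon (A k) x w" using h by blast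
      have wE: "w \<in> E" using w(1) cBE by blast
      obtain y where y: "y \<in> Y k j" "eqon (B k j) w y" using w(1) cB by blast
      have yE: "y \<in> E" using y Y by blast
      have "eqon (A k \<inter> B k j) x w" by (rule eqon_sub[OF w(2)]) (use Ak Bk x wE in auto)
      moreover have "eqon (A k \<inter> B k j) w y" by (rule eqon_sub[OF y(2)]) (use Ak Bk yE wE in auto)
      ultimately show "\<exists>y\<in>Y k j. eqon (A k \<inter> B k j) x y" using y(1) unfolding eqon_def by auto
    qed
    then show "x \<in> {x\<in>E. \<forall>k j. \<exists>y\<in>Y k j. eqon (A k \<inter> B k j) x y}" using x by blast
  next
    fix x assume "x \<in> {x\<in>E. \<forall>k j. \<exists>y\<in>Y k j. eqon (A k \<inter> B k j) x y}"
    then have x: "x \<in> E" and h: "\<And>k j. \<exists>y\<in>Y k j. eqon (A k \<inter> B k j) x y" by auto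
    have "\<forall>k. \<exists>w\<in>conc_sets E smul (B k) (Y k). eqon (A k) x w"
    proof
      fix k
      have "\<forall>j. \<exists>y. y \<in> Y k j \<and> eqon (A k \<inter> B k j) x y" using h by blast
      then have "\<exists>ys. \<forall>j. ys j \<in> Y k j \<and> eqon (A k \<inter> B k j) x (ys j)" by (rule choice)
      then obtain ys where ys: "\<And>j. ys j \<in> Y k j" "\<And>j. eqon (A k \<inter> B k j) x (ys j)" by blast
      have ysE: "\<And>j. ys j \<in> E" using ys(1) Y by blast
      define w where "w = conc E smul (B k) ys"
      have wE: "w \<in> E" using conc(1)[of "B k" ys, OF B ysE] w_def by simp
      have w: "w \<in> conc_sets E smul (B k) (Y k)" unfolding conc_sets_def w_def using ys(1) by blast
      have e: "\<And>j. eqon (A k \<inter> B k j) x w"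
      proof -
        fix j
        have "eqon (B k j) w (ys j)" using conc(2)[of "B k" ys, OF B ysE] w_def by simp
        then have "eqon (A k \<inter> B k j) w (ys j)" by (rule eqon_sub) (use Ak Bk wE ysE in auto)
        then show "eqon (A k \<inter> B k j) x w" using ys(2)[of j] unfolding eqon_def by simp
      qed
      have "eqon (\<Union>j. A k \<inter> B k j) x w" by (rule eqon_UN[OF _ x wE e]) (use Ak Bk in auto)
      moreover have "(\<Union>j. A k \<inter> B k j) = A k"
        using B[of k] sets.sets_into_space[OF Ak[of k]] unfolding meas_partition_def by blast
      ultimately show "\<exists>w\<in>conc_sets E smul (B k) (Y k). eqon (A k) x w" using w by auto
    qed
    then show "x \<in> {x\<in>E. \<forall>k. \<exists>y\<in>conc_sets E smul (B k) (Y k). eqon (A k) x y}" using x by blast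
  qed
qed

definition refpart :: "(nat \<Rightarrow> 'w set) \<Rightarrow> (nat \<Rightarrow> nat \<Rightarrow> 'w set) \<Rightarrow> nat \<Rightarrow> 'w set" where
  "refpart A B n = A (fst (prod_decode n)) \<inter> B (fst (prod_decode n)) (snd (prod_decode n))"

lemma refpart_mp: assumes A: "meas_partition M A" and B: "\<And>k. meas_partition M (B k)"
  shows "meas_partition M (refpart A B)"
proof -
  have s: "\<And>n. refpart A B n \<in> sets M" unfolding refpart_def using mp_sets[OF A] mp_sets[OF B] by blast
  have d: "disjoint_family (refpart A B)"
  proof (unfold disjoint_family_on_def, intro ballI impI)
    fix m n :: nat assume mn: "m \<noteq> n"
    obtain a b where ab: "prod_decode m = (a, b)" by fastforce
    obtain c d where cd: "prod_decode n = (c, d)" by fastforce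
    have "(a, b) \<noteq> (c, d)" using mn ab cd by (metis prod_decode_inverse)
    then have "a \<noteq> c \<or> (a = c \<and> b \<noteq> d)" by blast
    then show "refpart A B m \<inter> refpart A B n = {}"
    proof
      assume "a \<noteq> c" then show ?thesis using A ab cd unfolding refpart_def meas_partition_def disjoint_family_on_def by auto
    next
      assume "a = c \<and> b \<noteq> d" then show ?thesis using B[of a] ab cd unfolding refpart_def meas_partition_def disjoint_family_on_def by auto
    qed
  qed
  have u: "(\<Union>n. refpart A B n) = space M"
  proof
    show "(\<Union>n. refpart A B n) \<subseteq> space M" using s sets.sets_into_space by blast
    show "space M \<subseteq> (\<Union>n. refpart A B n)"
    proof
      fix w assume w: "w \<in> space M"
      obtain k where k: "w \<in> A k" using A w unfolding meas_partition_def by blast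
      obtain j where j: "w \<in> B k j" using B[of k] w unfolding meas_partition_def by blast
      have "w \<in> refpart A B (prod_encode (k, j))" using k j unfolding refpart_def by simp
      then show "w \<in> (\<Union>n. refpart A B n)" by blast
    qed
  qed
  show ?thesis using s d u unfolding meas_partition_def by blast
qed

lemma conc_sets_refpart:
  assumes A: "meas_partition M A" and B: "\<And>k. meas_partition M (B k)" and Y: "\<And>k j. Y k j \<subseteq> E"
  shows "conc_sets E smul (refpart A B) (\<lambda>n. Y (fst (prod_decode n)) (snd (prod_decode n))) =
         {x\<in>E. \<forall>k j. \<exists>y\<in>Y k j. eqon (A k \<inter> B k j) x y}"
proof -
  have P: "meas_partition M (refpart A B)" by (rule refpart_mp[OF A B])
  have "conc_sets E smul (refpart A B) (\<lambda>n. Y (fst (prod_decode n)) (snd (prod_decode n))) =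
        {x\<in>E. \<forall>n. \<exists>y\<in>Y (fst (prod_decode n)) (snd (prod_decode n)). eqon (refpart A B n) x y}"
    by (rule conc_sets_char[OF P]) (use Y in blast)
  also have "\<dots> = {x\<in>E. \<forall>k j. \<exists>y\<in>Y k j. eqon (A k \<inter> B k j) x y}"
  proof (intro Collect_cong conj_cong refl iffI allI)
    fix x k j assume "\<forall>n. \<exists>y\<in>Y (fst (prod_decode n)) (snd (prod_decode n)). eqon (refpart A B n) x y"
    then show "\<exists>y\<in>Y k j. eqon (A k \<inter> B k j) x y" by (metis fst_conv snd_conv prod_encode_inverse refpart_def)
  next
    fix x n assume "\<forall>k j. \<exists>y\<in>Y k j. eqon (A k \<inter> B k j) x y"
    then show "\<exists>y\<in>Y (fst (prod_decode n)) (snd (prod_decode n)). eqon (refpart A B n) x y"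
      unfolding refpart_def by blast
  qed
  finally show ?thesis .
qed

lemma conc_sets_assoc:
  assumes A: "meas_partition M A" and B: "\<And>k. meas_partition M (B k)" and Y: "\<And>k j. Y k j \<subseteq> E"
  shows "conc_sets E smul A (\<lambda>k. conc_sets E smul (B k) (Y k)) =
         conc_sets E smul (refpart A B) (\<lambda>n. Y (fst (prod_decode n)) (snd (prod_decode n)))"
  using conc_sets_char2[of A B Y, OF A B Y] conc_sets_refpart[of A B Y, OF A B Y] by simp

lemma conc_sets_comm:
  assumes A: "meas_partition M A" and B: "meas_partition M B" and V: "\<And>n k. V n k \<subseteq> E"
  shows "conc_sets E smul B (\<lambda>n. conc_sets E smul A (V n)) =
         conc_sets E smul A (\<lambda>k. conc_sets E smul B (\<lambda>n. V n k))"
proof -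
  have "conc_sets E smul B (\<lambda>n. conc_sets E smul A (V n)) = {x\<in>E. \<forall>n k. \<exists>y\<in>V n k. eqon (B n \<inter> A k) x y}"
    by (rule conc_sets_char2[of B "\<lambda>_. A" V, OF B A V])
  also have "\<dots> = {x\<in>E. \<forall>k n. \<exists>y\<in>V n k. eqon (A k \<inter> B n) x y}" by (auto simp: Int_commute)
  also have "\<dots> = conc_sets E smul A (\<lambda>k. conc_sets E smul B (\<lambda>n. V n k))"
    by (rule conc_sets_char2[of A "\<lambda>_. B" "\<lambda>k n. V n k", OF A B V, symmetric])
  finally show ?thesis .
qed

lemma conc_sets_subE: "meas_partition M A \<Longrightarrow> (\<And>k. Y k \<subseteq> E) \<Longrightarrow> conc_sets E smul A Y \<subseteq> E"
  using conc_sets_char by blast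

lemma conc_sets_stable: assumes A: "meas_partition M A" and Y: "\<And>k. stable_set M E smul (Y k)"
  shows "stable_set M E smul (conc_sets E smul A Y)"
proof -
  have YE: "\<And>k. Y k \<subseteq> E" using Y stable_sub by blast
  have ch: "conc_sets E smul A Y = {x\<in>E. \<forall>k. \<exists>y\<in>Y k. eqon (A k) x y}" by (rule conc_sets_char[OF A YE])
  have ne: "conc_sets E smul A Y \<noteq> {}"
  proof -
    have "\<forall>k. \<exists>y. y \<in> Y k" using Y stable_ne by blast
    then obtain ys where "\<forall>k. ys k \<in> Y k" by (metis choice)
    then show ?thesis unfolding conc_sets_def by blast
  qed
  have cl: "\<And>B xs. meas_partition M B \<Longrightarrow> (\<forall>n. xs n \<in> conc_sets E smul A Y) \<Longrightarrow> conc E smul B xs \<in> conc_sets E smul A Y"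
  proof -
    fix B :: "nat \<Rightarrow> 'w set" and xs :: "nat \<Rightarrow> 'e" assume B: "meas_partition M B" and xs: "\<forall>n. xs n \<in> conc_sets E smul A Y"
    have xsE: "\<And>n. xs n \<in> E" using xs ch by blast
    define z where "z = conc E smul B xs"
    have zE: "z \<in> E" using conc(1)[of B xs, OF B xsE] z_def by simp
    have "\<forall>k. \<exists>y\<in>Y k. eqon (A k) z y"
    proof
      fix k
      have "\<forall>n. \<exists>y. y \<in> Y k \<and> eqon (A k) (xs n) y" using xs ch by blast
      then have "\<exists>ys. \<forall>n. ys n \<in> Y k \<and> eqon (A k) (xs n) (ys n)" by (rule choice)
      then obtain ys where ys: "\<And>n. ys n \<in> Y k" "\<And>n. eqon (A k) (xs n) (ys n)" by blast
      have ysE: "\<And>n. ys n \<in> E" using ys YE by blast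
      define y where "y = conc E smul B ys"
      have yY: "y \<in> Y k" unfolding y_def by (rule stable_conc[OF Y B ys(1)])
      have yE: "y \<in> E" using yY YE by blast
      have Ak: "A k \<in> sets M" using mp_sets[OF A] .
      have Bn: "\<And>n. B n \<in> sets M" using mp_sets[OF B] .
      have e: "\<And>n. eqon (A k \<inter> B n) z y"
      proof -
        fix n
        have "eqon (B n) z (xs n)" using conc(2)[of B xs, OF B xsE] z_def by simp
        then have 1: "eqon (A k \<inter> B n) z (xs n)" by (rule eqon_sub) (use Ak Bn zE xsE in auto)
        have "eqon (B n) y (ys n)" using conc(2)[of B ys, OF B ysE] y_def by simp
        then have 2: "eqon (A k \<inter> B n) y (ys n)" by (rule eqon_sub) (use Ak Bn yE ysE in auto)
        have 3: "eqon (A k \<inter> B n) (xs n) (ys n)" by (rule eqon_sub[OF ys(2)[of n]]) (use Ak Bn ysE xsE in auto)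
        show "eqon (A k \<inter> B n) z y" using 1 2 3 unfolding eqon_def by simp
      qed
      have "eqon (\<Union>n. A k \<inter> B n) z y" by (rule eqon_UN[OF _ zE yE e]) (use Ak Bn in auto)
      moreover have "(\<Union>n. A k \<inter> B n) = A k"
        using B sets.sets_into_space[OF Ak] unfolding meas_partition_def by blast
      ultimately show "\<exists>y\<in>Y k. eqon (A k) z y" using yY by auto
    qed
    then show "conc E smul B xs \<in> conc_sets E smul A Y" using zE ch z_def by simp
  qed
  show ?thesis unfolding stable_set_def using ne cl conc_sets_subE[of A Y, OF A YE] by blast
qed

end

context stabmod begin

definition triv :: "nat \<Rightarrow> 'w set" where "triv = seqpart (\<lambda>_. space M)"
definition part2 :: "'w set \<Rightarrow> nat \<Rightarrow> 'w set" where "part2 D = seqpart (\<lambda>_. D)"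

lemma disjointed_const: "disjointed (\<lambda>_. D) (Suc n) = {}"
  by (auto simp: disjointed_def)

lemma triv_mp: "meas_partition M triv" unfolding triv_def by (rule seqpart_mp) simp
lemma triv_1: "triv (Suc 0) = space M" unfolding triv_def by (simp add: seqpart_Suc disjointed_def)
lemma triv_other: "k \<noteq> Suc 0 \<Longrightarrow> triv k = {}"
  unfolding triv_def by (cases k) (auto simp: seqpart_0 seqpart_Suc disjointed_def gr0_conv_Suc)

lemma part2_mp: "D \<in> sets M \<Longrightarrow> meas_partition M (part2 D)" unfolding part2_def by (rule seqpart_mp) simp
lemma part2_0: "part2 D 0 = space M - D" unfolding part2_def by (simp add: seqpart_0)
lemma part2_1: "part2 D (Suc 0) = D" unfolding part2_def by (simp add: seqpart_Suc disjointed_def)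
lemma part2_other: "part2 D (Suc (Suc n)) = {}" unfolding part2_def by (simp add: seqpart_Suc disjointed_def)

lemma conc_sets_triv: assumes YE: "\<And>k. Y k \<subseteq> E" and Yne: "\<And>k. Y k \<noteq> {}"
  shows "conc_sets E smul triv Y = Y (Suc 0)"
proof -
  have "{x\<in>E. \<forall>k. \<exists>y\<in>Y k. eqon (triv k) x y} = Y (Suc 0)"
  proof
    show "{x\<in>E. \<forall>k. \<exists>y\<in>Y k. eqon (triv k) x y} \<subseteq> Y (Suc 0)"
    proof
      fix x assume "x \<in> {x\<in>E. \<forall>k. \<exists>y\<in>Y k. eqon (triv k) x y}"
      then have x: "x \<in> E" and "\<exists>y\<in>Y (Suc 0). eqon (triv (Suc 0)) x y" by auto
      then obtain y where y: "y \<in> Y (Suc 0)" "eqon (space M) x y" unfolding triv_1 by blast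
      have yE: "y \<in> E" using y(1) YE by blast
      have "x = y" using y(2) R_space[OF x] R_space[OF yE] unfolding eqon_def by simp
      then show "x \<in> Y (Suc 0)" using y by simp
    qed
    show "Y (Suc 0) \<subseteq> {x\<in>E. \<forall>k. \<exists>y\<in>Y k. eqon (triv k) x y}"
    proof
      fix x assume x: "x \<in> Y (Suc 0)"
      have xE: "x \<in> E" using x YE by blast
      have "\<exists>y\<in>Y k. eqon (triv k) x y" for k
      proof (cases "k = Suc 0")
        case True then show ?thesis using x eqon_refl by blast
      next
        case False
        obtain y where y: "y \<in> Y k" using Yne by blast
        have yE: "y \<in> E" using y YE by blast
        have "eqon (triv k) x y" unfolding triv_other[OF False] by (rule eqon_empty[OF xE yE])
        then show ?thesis using y by blast
      qed
      then show "x \<in> {x\<in>E. \<forall>k. \<exists>y\<in>Y k. eqon (triv k) x y}" using xE by blast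
    qed
  qed
  then show ?thesis by (subst conc_sets_char[OF triv_mp YE])
qed

lemma sc_stable: "stable_coll M E smul X \<Longrightarrow> Y \<in> X \<Longrightarrow> stable_set M E smul Y"
  unfolding stable_coll_def by blast
lemma sc_conc: "stable_coll M E smul X \<Longrightarrow> meas_partition M A \<Longrightarrow> (\<And>k. Y k \<in> X) \<Longrightarrow> conc_sets E smul A Y \<in> X"
  unfolding stable_coll_def by blast
lemma sc_ne: "stable_coll M E smul X \<Longrightarrow> X \<noteq> {}" unfolding stable_coll_def by blast

lemma st_mono: "Os \<subseteq> Os' \<Longrightarrow> st M E smul Os \<subseteq> st M E smul Os'"
  unfolding st_def by blast

lemma st_sub: "stable_coll M E smul X \<Longrightarrow> Os \<subseteq> X \<Longrightarrow> st M E smul Os \<subseteq> X"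
  unfolding st_def using sc_conc by blast

lemma st_self: assumes V: "stable_set M E smul V" and VO: "V \<in> Os" shows "V \<in> st M E smul Os"
proof -
  have e: "V = conc_sets E smul triv (\<lambda>_. V)" using conc_sets_const[OF V triv_mp] by simp
  show ?thesis unfolding st_def
    by (rule CollectI, rule exI[of _ triv], rule exI[of _ "\<lambda>_. V"]) (use e triv_mp VO in auto)
qed

lemma st_stable: assumes "\<And>U. U \<in> Os \<Longrightarrow> stable_set M E smul U" "W \<in> st M E smul Os"
  shows "stable_set M E smul W"
  using assms conc_sets_stable unfolding st_def by blast

lemma st_closed: assumes S: "\<And>U. U \<in> Os \<Longrightarrow> stable_set M E smul U" and A: "meas_partition M A"
  and V: "\<And>k. V k \<in> st M E smul Os" shows "conc_sets E smul A V \<in> st M E smul Os"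
proof -
  have "\<forall>k. \<exists>p. V k = conc_sets E smul (fst p) (snd p) \<and> meas_partition M (fst p) \<and> (\<forall>j. snd p j \<in> Os)"
  proof
    fix k
    obtain B U where "V k = conc_sets E smul B U" "meas_partition M B" "\<forall>j. U j \<in> Os" using V[of k] unfolding st_def by blast
    then show "\<exists>p. V k = conc_sets E smul (fst p) (snd p) \<and> meas_partition M (fst p) \<and> (\<forall>j. snd p j \<in> Os)"
      by (intro exI[of _ "(B, U)"]) simp
  qed
  then obtain f where f: "\<And>k. V k = conc_sets E smul (fst (f k)) (snd (f k)) \<and> meas_partition M (fst (f k)) \<and> (\<forall>j. snd (f k) j \<in> Os)"
    by (metis choice)
  define B where "B = (\<lambda>k. fst (f k))"
  define U where "U = (\<lambda>k. snd (f k))"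
  have BU: "\<And>k. V k = conc_sets E smul (B k) (U k)" "\<And>k. meas_partition M (B k)" "\<And>k j. U k j \<in> Os"
    using f unfolding B_def U_def by blast+
  have UE: "\<And>k j. U k j \<subseteq> E" using BU(3) S stable_sub by blast
  have "V = (\<lambda>k. conc_sets E smul (B k) (U k))" by (intro ext) (rule BU(1))
  then have "conc_sets E smul A V = conc_sets E smul A (\<lambda>k. conc_sets E smul (B k) (U k))" by simp
  also have "\<dots> = conc_sets E smul (refpart A B) (\<lambda>n. U (fst (prod_decode n)) (snd (prod_decode n)))"
    by (rule conc_sets_assoc[OF A BU(2) UE])
  finally show ?thesis unfolding st_def
    by (intro CollectI exI[of _ "refpart A B"] exI[of _ "\<lambda>n. U (fst (prod_decode n)) (snd (prod_decode n))"])
      (use refpart_mp[OF A BU(2)] BU(3) in auto)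
qed

lemma st_single: assumes V: "stable_set M E smul V" shows "st M E smul {V} = {V}"
proof
  show "{V} \<subseteq> st M E smul {V}" using st_self[OF V] by blast
  show "st M E smul {V} \<subseteq> {V}"
  proof
    fix W assume "W \<in> st M E smul {V}"
    then obtain B U where "W = conc_sets E smul B U" "meas_partition M B" "\<And>j. U j \<in> {V}" unfolding st_def by blast
    then have "W = conc_sets E smul B (\<lambda>_. V)" "meas_partition M B" by (auto intro!: arg_cong[where f="conc_sets E smul B"])
    then show "W \<in> {V}" using conc_sets_const[OF V] by simp
  qed
qed

definition Odat :: "(nat \<Rightarrow> 'w set) \<Rightarrow> (nat \<Rightarrow> 'e set set) \<Rightarrow> 'e set set" where
  "Odat A Os = {conc_sets E smul A V | V. \<forall>k. V k \<in> st M E smul (Os k)}"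

definition okdat :: "'e set set \<Rightarrow> (nat \<Rightarrow> 'w set) \<Rightarrow> (nat \<Rightarrow> 'e set set) \<Rightarrow> bool" where
  "okdat \<O> A Os \<longleftrightarrow> meas_partition M A \<and> (\<forall>k. finite (Os k) \<and> Os k \<noteq> {} \<and> Os k \<subseteq> \<O>)"

lemma Odat_sub: assumes O: "stable_coll M E smul \<O>" and d: "okdat \<O> A Os" shows "Odat A Os \<subseteq> \<O>"
proof
  fix W assume "W \<in> Odat A Os"
  then obtain V where W: "W = conc_sets E smul A V" "\<And>k. V k \<in> st M E smul (Os k)" unfolding Odat_def by blast
  have "\<And>k. V k \<in> \<O>" using W(2) st_sub[OF O] d unfolding okdat_def by blast
  then show "W \<in> \<O>" using sc_conc[OF O] d W(1) unfolding okdat_def by blast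
qed

lemma Odat_sfs: assumes O: "stable_coll M E smul \<O>" and d: "okdat \<O> A Os"
  shows "stable_finite_sub M E smul \<O> (Odat A Os)"
  unfolding stable_finite_sub_def
  by (rule conjI[OF Odat_sub[OF O d]], rule exI[of _ A], rule exI[of _ Os]) (use d in \<open>auto simp: okdat_def Odat_def\<close>)

lemma sfs_Odat: "stable_finite_sub M E smul \<O> \<O>' \<Longrightarrow> \<exists>A Os. okdat \<O> A Os \<and> \<O>' = Odat A Os"
  unfolding stable_finite_sub_def okdat_def Odat_def by blast

lemma Odat_stable: assumes O: "stable_coll M E smul \<O>" and d: "okdat \<O> A Os" and W: "W \<in> Odat A Os"
  shows "stable_set M E smul W"
  using Odat_sub[OF O d] W sc_stable[OF O] by blast

lemma okdat_triv: "V \<in> \<O> \<Longrightarrow> okdat \<O> triv (\<lambda>_. {V})"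
  unfolding okdat_def using triv_mp by simp

lemma Odat_single: assumes V: "stable_set M E smul V" shows "Odat triv (\<lambda>_. {V}) = {V}"
proof -
  have "Odat triv (\<lambda>_. {V}) = {conc_sets E smul triv V' | V'. \<forall>k. V' k \<in> {V}}"
    unfolding Odat_def st_single[OF V] ..
  also have "\<dots> = {conc_sets E smul triv (\<lambda>_. V)}"
  proof (intro equalityI subsetI)
    fix W assume "W \<in> {conc_sets E smul triv V' | V'. \<forall>k. V' k \<in> {V}}"
    then obtain V' where W: "W = conc_sets E smul triv V'" "\<forall>k. V' k \<in> {V}" by blast
    then have "V' = (\<lambda>_. V)" by auto
    then show "W \<in> {conc_sets E smul triv (\<lambda>_. V)}" using W by simp
  next
    fix W assume "W \<in> {conc_sets E smul triv (\<lambda>_. V)}"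
    then show "W \<in> {conc_sets E smul triv V' | V'. \<forall>k. V' k \<in> {V}}" by blast
  qed
  also have "\<dots> = {V}" using conc_sets_const[OF V triv_mp] by simp
  finally show ?thesis .
qed

lemma Odat_ne: assumes O: "stable_coll M E smul \<O>" and d: "okdat \<O> A Os" shows "Odat A Os \<noteq> {}"
proof -
  have "\<forall>k. \<exists>U. U \<in> Os k" using d unfolding okdat_def by blast
  then obtain U where U: "\<And>k. U k \<in> Os k" by metis
  have "\<And>k. U k \<in> st M E smul (Os k)"
    using U st_self sc_stable[OF O] d unfolding okdat_def by blast
  then show ?thesis unfolding Odat_def by blast
qed

end

context stabmod begin

lemma Odat_elem: "W \<in> Odat A Os \<Longrightarrow> \<exists>V. W = conc_sets E smul A V \<and> (\<forall>k. V k \<in> st M E smul (Os k))"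
  unfolding Odat_def by blast

lemma Odat_intro: "W = conc_sets E smul A V \<Longrightarrow> (\<And>k. V k \<in> st M E smul (Os k)) \<Longrightarrow> W \<in> Odat A Os"
  unfolding Odat_def by blast

lemma okdat_stable: "stable_coll M E smul \<O> \<Longrightarrow> okdat \<O> A Os \<Longrightarrow> U \<in> Os k \<Longrightarrow> stable_set M E smul U"
  unfolding okdat_def using sc_stable by blast

lemma okdat_st_stable: "stable_coll M E smul \<O> \<Longrightarrow> okdat \<O> A Os \<Longrightarrow> V \<in> st M E smul (Os k) \<Longrightarrow> stable_set M E smul V"
  using st_stable okdat_stable by metis

lemma Odat_refine:
  assumes O: "stable_coll M E smul \<O>" and d1: "okdat \<O> A1 Os1" and d2: "okdat \<O> A2 Os2"
  defines "A3 \<equiv> refpart A1 (\<lambda>_. A2)"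
  defines "Os3 \<equiv> (\<lambda>n. Os1 (fst (prod_decode n)) \<union> Os2 (snd (prod_decode n)))"
  shows "okdat \<O> A3 Os3" "Odat A1 Os1 \<subseteq> Odat A3 Os3" "Odat A2 Os2 \<subseteq> Odat A3 Os3"
proof -
  have A1: "meas_partition M A1" and A2: "meas_partition M A2" using d1 d2 unfolding okdat_def by auto
  have A3: "meas_partition M A3" unfolding A3_def by (rule refpart_mp[OF A1 A2])
  show "okdat \<O> A3 Os3" using A3 d1 d2 unfolding okdat_def Os3_def by auto
  show "Odat A1 Os1 \<subseteq> Odat A3 Os3"
  proof
    fix W assume "W \<in> Odat A1 Os1"
    then obtain V where W: "W = conc_sets E smul A1 V" "\<And>k. V k \<in> st M E smul (Os1 k)" using Odat_elem by blast
    have Vs: "\<And>k. stable_set M E smul (V k)" using okdat_st_stable[OF O d1 W(2)] .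
    have VE: "\<And>k j. (\<lambda>k j. V k) k j \<subseteq> E" using Vs stable_sub by blast
    have "(\<lambda>k. conc_sets E smul A2 (\<lambda>_. V k)) = V" using conc_sets_const[OF Vs A2] by simp
    then have "W = conc_sets E smul A1 (\<lambda>k. conc_sets E smul ((\<lambda>_. A2) k) ((\<lambda>k j. V k) k))" using W(1) by simp
    also have "\<dots> = conc_sets E smul A3 (\<lambda>n. V (fst (prod_decode n)))"
      unfolding A3_def by (rule conc_sets_assoc[of A1 "\<lambda>_. A2" "\<lambda>k j. V k", OF A1 A2 VE])
    finally show "W \<in> Odat A3 Os3"
      by (rule Odat_intro) (unfold Os3_def, meson W(2) st_mono[OF Un_upper1] subsetD)
  qed
  show "Odat A2 Os2 \<subseteq> Odat A3 Os3"
  proof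
    fix W assume "W \<in> Odat A2 Os2"
    then obtain V where W: "W = conc_sets E smul A2 V" "\<And>k. V k \<in> st M E smul (Os2 k)" using Odat_elem by blast
    have Vs: "\<And>k. stable_set M E smul (V k)" using okdat_st_stable[OF O d2 W(2)] .
    have VE: "\<And>n k. (\<lambda>n k. V n) n k \<subseteq> E" using Vs stable_sub by blast
    have "(\<lambda>j. conc_sets E smul A1 (\<lambda>_. V j)) = V" using conc_sets_const[OF Vs A1] by simp
    then have e1: "W = conc_sets E smul A2 (\<lambda>n. conc_sets E smul A1 ((\<lambda>n k. V n) n))" using W(1) by simp
    have e2: "conc_sets E smul A2 (\<lambda>n. conc_sets E smul A1 ((\<lambda>n k. V n) n)) = conc_sets E smul A1 (\<lambda>k. conc_sets E smul A2 (\<lambda>n. (\<lambda>n k. V n) n k))"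
      by (rule conc_sets_comm[OF A1 A2 VE])
    have VE2: "\<And>k j. (\<lambda>k j. V j) k j \<subseteq> E" using VE by simp
    have e3: "conc_sets E smul A1 (\<lambda>k. conc_sets E smul ((\<lambda>_. A2) k) ((\<lambda>k j. V j) k)) = conc_sets E smul A3 (\<lambda>n. V (snd (prod_decode n)))"
      unfolding A3_def by (rule conc_sets_assoc[of A1 "\<lambda>_. A2" "\<lambda>k j. V j", OF A1 A2 VE2])
    have "W = conc_sets E smul A3 (\<lambda>n. V (snd (prod_decode n)))" using e1 e2 e3 by simp
    then show "W \<in> Odat A3 Os3"
      by (rule Odat_intro) (unfold Os3_def, meson W(2) st_mono[OF Un_upper2] subsetD)
  qed
qed

lemma Odat_glue:
  assumes O: "stable_coll M E smul \<O>" and d: "okdat \<O> A Os" and B: "meas_partition M B"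
    and W: "\<And>n. W n \<in> Odat A Os"
  shows "conc_sets E smul B W \<in> Odat A Os"
proof -
  have A: "meas_partition M A" using d unfolding okdat_def by auto
  have "\<forall>n. \<exists>V. W n = conc_sets E smul A V \<and> (\<forall>k. V k \<in> st M E smul (Os k))" using W Odat_elem by blast
  then obtain V where V: "\<And>n. W n = conc_sets E smul A (V n)" "\<And>n k. V n k \<in> st M E smul (Os k)" by metis
  have VE: "\<And>n k. V n k \<subseteq> E" using okdat_st_stable[OF O d V(2)] stable_sub by blast
  have "W = (\<lambda>n. conc_sets E smul A (V n))" using V(1) by (intro ext) simp
  then have "conc_sets E smul B W = conc_sets E smul A (\<lambda>k. conc_sets E smul B (\<lambda>n. V n k))"
    using conc_sets_comm[OF A B VE] by simp
  moreover have "\<And>k. conc_sets E smul B (\<lambda>n. V n k) \<in> st M E smul (Os k)"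
    by (rule st_closed[OF _ B]) (use okdat_stable[OF O d] V(2) in auto)
  ultimately show ?thesis by (intro Odat_intro) auto
qed

lemma Odat_combine:
  assumes O: "stable_coll M E smul \<O>" and Q: "meas_partition M Q" and d: "\<And>n. okdat \<O> (A n) (Os n)"
  defines "A' \<equiv> refpart Q A"
  defines "Os' \<equiv> (\<lambda>m. Os (fst (prod_decode m)) (snd (prod_decode m)))"
  shows "okdat \<O> A' Os'" "\<And>W. (\<And>n. W n \<in> Odat (A n) (Os n)) \<Longrightarrow> conc_sets E smul Q W \<in> Odat A' Os'"
proof -
  have A: "\<And>n. meas_partition M (A n)" using d unfolding okdat_def by auto
  show "okdat \<O> A' Os'" using refpart_mp[OF Q A] d unfolding okdat_def A'_def Os'_def by auto
  fix W assume W: "\<And>n. W n \<in> Odat (A n) (Os n)"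
  have "\<forall>n. \<exists>V. W n = conc_sets E smul (A n) V \<and> (\<forall>k. V k \<in> st M E smul (Os n k))" using W Odat_elem by blast
  then obtain V where V: "\<And>n. W n = conc_sets E smul (A n) (V n)" "\<And>n k. V n k \<in> st M E smul (Os n k)" by metis
  have VE: "\<And>n k. V n k \<subseteq> E" using okdat_st_stable[OF O d V(2)] stable_sub by blast
  have "W = (\<lambda>n. conc_sets E smul (A n) (V n))" using V(1) by (intro ext) simp
  then have "conc_sets E smul Q W = conc_sets E smul A' (\<lambda>m. V (fst (prod_decode m)) (snd (prod_decode m)))"
    using conc_sets_assoc[OF Q A VE] unfolding A'_def by simp
  then show "conc_sets E smul Q W \<in> Odat A' Os'"
    by (rule Odat_intro) (use V(2) in \<open>auto simp: Os'_def\<close>)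
qed

end


locale stabtop = stabmod M E zero add smul for M :: "'w measure" and E :: "'e set" and zero add smul +
  fixes S :: "'e set" and T :: "'e topology" and Bs :: "'e set set"
  assumes Sst: "stable_set M E smul S"
    and top: "topspace T = S"
    and Bs: "stable_coll M E smul Bs"
    and Bo: "\<And>B. B \<in> Bs \<Longrightarrow> openin T B"
    and Bgen: "\<And>U. openin T U \<Longrightarrow> \<exists>\<U>\<subseteq>Bs. U = \<Union>\<U>"
begin

lemma SE: "S \<subseteq> E" using stable_sub[OF Sst] .

lemma open_base: "openin T U \<Longrightarrow> x \<in> U \<Longrightarrow> \<exists>B\<in>Bs. x \<in> B \<and> B \<subseteq> U"
  using Bgen by blast

lemma S_base: "x \<in> S \<Longrightarrow> \<exists>B\<in>Bs. x \<in> B"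
  using open_base[OF openin_topspace[of T]] top by blast

lemma Bs_sub: "B \<in> Bs \<Longrightarrow> B \<subseteq> S" using Bo openin_subset top by blast

lemma Bs_stable: "B \<in> Bs \<Longrightarrow> stable_set M E smul B" using sc_stable[OF Bs] .

lemma conc_sets_S: assumes A: "meas_partition M A" and Y: "\<And>k. Y k \<subseteq> S"
  shows "conc_sets E smul A Y \<subseteq> S"
  using conc_sets_mono[of Y "\<lambda>_. S" A] Y conc_sets_const[OF Sst A] by blast

lemma nbhd_transfer:
  assumes U: "U \<in> Bs" and z: "z \<in> U" and x: "x \<in> S" and D: "D \<in> sets M" and e: "eqon D x z"
  shows "\<exists>U'\<in>Bs. x \<in> U' \<and> (\<forall>u'\<in>U'. \<exists>u\<in>U. eqon D u' u)"
proof -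
  obtain V where V: "V \<in> Bs" "x \<in> V" using S_base[OF x] by blast
  define Y where "Y = (\<lambda>k::nat. if k = Suc 0 then U else V)"
  have YB: "\<And>k. Y k \<in> Bs" using U V unfolding Y_def by simp
  have YE: "\<And>k. Y k \<subseteq> E" using YB Bs_sub SE by blast
  have P: "meas_partition M (part2 D)" by (rule part2_mp[OF D])
  define U' where "U' = conc_sets E smul (part2 D) Y"
  have U'B: "U' \<in> Bs" unfolding U'_def by (rule sc_conc[OF Bs P YB])
  have ch: "U' = {x\<in>E. \<forall>k. \<exists>y\<in>Y k. eqon (part2 D k) x y}" unfolding U'_def by (rule conc_sets_char[OF P YE])
  have xE: "x \<in> E" using x SE by blast
  have "\<forall>k. \<exists>y\<in>Y k. eqon (part2 D k) x y"
  proof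
    fix k show "\<exists>y\<in>Y k. eqon (part2 D k) x y"
    proof (cases "k = Suc 0")
      case True then show ?thesis using z e part2_1 unfolding Y_def by auto
    next
      case False then show ?thesis using V(2) eqon_refl[of "part2 D k" x] unfolding Y_def by (simp only: if_False) blast
    qed
  qed
  then have xU': "x \<in> U'" using ch xE by blast
  have "\<forall>u'\<in>U'. \<exists>u\<in>U. eqon D u' u"
  proof
    fix u' assume "u' \<in> U'"
    then have "\<exists>y\<in>Y (Suc 0). eqon (part2 D (Suc 0)) u' y" using ch by blast
    then show "\<exists>u\<in>U. eqon D u' u" unfolding Y_def part2_1 by simp
  qed
  then show ?thesis using U'B xU' by blast
qed

lemma in_closure: assumes Y: "Y \<subseteq> S"
  shows "x \<in> T closure_of Y \<longleftrightarrow> x \<in> S \<and> (\<forall>B\<in>Bs. x \<in> B \<longrightarrow> B \<inter> Y \<noteq> {})"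
proof
  assume "x \<in> T closure_of Y"
  then show "x \<in> S \<and> (\<forall>B\<in>Bs. x \<in> B \<longrightarrow> B \<inter> Y \<noteq> {})"
    using Bo top unfolding in_closure_of by blast
next
  assume h: "x \<in> S \<and> (\<forall>B\<in>Bs. x \<in> B \<longrightarrow> B \<inter> Y \<noteq> {})"
  show "x \<in> T closure_of Y" unfolding in_closure_of
  proof (intro conjI allI impI)
    show "x \<in> topspace T" using h top by simp
    fix U assume "x \<in> U \<and> openin T U"
    then obtain B where "B \<in> Bs" "x \<in> B" "B \<subseteq> U" using open_base by blast
    then show "\<exists>y. y \<in> Y \<and> y \<in> U" using h by blast
  qed
qed

lemma closure_sub: "T closure_of Y \<subseteq> S" using closure_of_subset_topspace[of T Y] top by simp

lemma closure_conc_sets: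
  assumes A: "meas_partition M A" and Ys: "\<And>k. stable_set M E smul (Y k)" and YS: "\<And>k. Y k \<subseteq> S"
  shows "T closure_of (conc_sets E smul A Y) = conc_sets E smul A (\<lambda>k. T closure_of (Y k))"
proof -
  have YE: "\<And>k. Y k \<subseteq> E" using YS SE by blast
  have clS: "\<And>k. T closure_of (Y k) \<subseteq> S" using closure_sub .
  have clE: "\<And>k. T closure_of (Y k) \<subseteq> E" using clS SE by blast
  have CS: "conc_sets E smul A Y \<subseteq> S" by (rule conc_sets_S[OF A YS])
  have chY: "conc_sets E smul A Y = {x\<in>E. \<forall>k. \<exists>y\<in>Y k. eqon (A k) x y}" by (rule conc_sets_char[OF A YE])
  have chC: "conc_sets E smul A (\<lambda>k. T closure_of (Y k)) = {x\<in>E. \<forall>k. \<exists>y\<in>T closure_of (Y k). eqon (A k) x y}"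
    by (rule conc_sets_char[OF A clE])
  have Ak: "\<And>k. A k \<in> sets M" using mp_sets[OF A] .
  show ?thesis
  proof (intro equalityI subsetI)
    fix z assume z: "z \<in> T closure_of (conc_sets E smul A Y)"
    have zS: "z \<in> S" using z closure_sub by blast
    have zE: "z \<in> E" using zS SE by blast
    have "\<forall>k. \<exists>x\<in>T closure_of (Y k). eqon (A k) z x"
    proof
      fix k
      obtain p where p: "p \<in> Y k" using stable_ne[OF Ys[of k]] by blast
      have pS: "p \<in> S" using p YS by blast
      have pE: "p \<in> E" using pS SE by blast
      define xs where "xs = (\<lambda>n::nat. if n = 0 then p else z)"
      have xsS: "\<And>n. xs n \<in> S" using pS zS unfolding xs_def by simp
      have xsE: "\<And>n. xs n \<in> E" using xsS SE by blast
      have P: "meas_partition M (part2 (A k))" by (rule part2_mp[OF Ak])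
      define x where "x = conc E smul (part2 (A k)) xs"
      have xS: "x \<in> S" unfolding x_def by (rule stable_conc[OF Sst P xsS])
      have xE: "x \<in> E" using xS SE by blast
      have exz: "eqon (A k) x z" using conc(2)[of "part2 (A k)" xs, OF P xsE, of "Suc 0"] unfolding x_def part2_1 xs_def by simp
      have exp: "eqon (space M - A k) x p" using conc(2)[of "part2 (A k)" xs, OF P xsE, of 0] unfolding x_def part2_0 xs_def by simp
      have "x \<in> T closure_of (Y k)" unfolding in_closure[OF YS]
      proof (intro conjI ballI impI xS)
        fix U assume U: "U \<in> Bs" "x \<in> U"
        have "eqon (A k) z x" using exz eqon_sym by blast
        then obtain U' where U': "U' \<in> Bs" "z \<in> U'" "\<forall>u'\<in>U'. \<exists>u\<in>U. eqon (A k) u' u"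
          using nbhd_transfer[OF U(1) U(2) zS Ak] by blast
        obtain w where w: "w \<in> U'" "w \<in> conc_sets E smul A Y"
          using z U' unfolding in_closure[OF CS] by blast
        have wE: "w \<in> E" using w(2) chY by blast
        obtain y where y: "y \<in> Y k" "eqon (A k) w y" using w(2) chY by blast
        obtain u where u: "u \<in> U" "eqon (A k) w u" using U'(3) w(1) by blast
        define ws where "ws = (\<lambda>n::nat. if n = 0 then p else w)"
        have wsE: "\<And>n. ws n \<in> E" using pE wE unfolding ws_def by simp
        define w' where "w' = conc E smul (part2 (A k)) ws"
        have w'E: "w' \<in> E" unfolding w'_def by (rule conc(1)[OF P wsE])
        have e1: "eqon (A k) w' w" using conc(2)[of "part2 (A k)" ws, OF P wsE, of "Suc 0"] unfolding w'_def part2_1 ws_def by simp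
        have e0: "eqon (space M - A k) w' p" using conc(2)[of "part2 (A k)" ws, OF P wsE, of 0] unfolding w'_def part2_0 ws_def by simp
        have w'Y: "w' \<in> Y k"
        proof (rule locality[OF Ys P w'E])
          fix n show "\<exists>v\<in>Y k. eqon (part2 (A k) n) w' v"
          proof (cases n)
            case 0 then show ?thesis using e0 p part2_0 by auto
          next
            case (Suc m) then show ?thesis
            proof (cases m)
              case 0 then show ?thesis using e1 y \<open>n = Suc m\<close> part2_1 unfolding eqon_def by auto
            next
              case (Suc m')
              have "p \<in> E" using p YE by blast
              then have "eqon (part2 (A k) n) w' p" using \<open>n = Suc m\<close> Suc part2_other eqon_empty[OF w'E] by simp
              then show ?thesis using p by blast
            qed
          qed
        qed
        have Us: "stable_set M E smul U" using Bs_stable[OF U(1)] .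
        have uE: "u \<in> E" using u(1) Bs_sub[OF U(1)] SE by blast
        have w'U: "w' \<in> U"
        proof (rule locality[OF Us P w'E])
          fix n show "\<exists>v\<in>U. eqon (part2 (A k) n) w' v"
          proof (cases n)
            case 0
            have "eqon (space M - A k) w' x" using e0 exp unfolding eqon_def by simp
            then show ?thesis using U(2) 0 part2_0 by auto
          next
            case (Suc m) then show ?thesis
            proof (cases m)
              case 0 then show ?thesis using e1 u \<open>n = Suc m\<close> part2_1 unfolding eqon_def by auto
            next
              case (Suc m')
              have "eqon (part2 (A k) n) w' u" using \<open>n = Suc m\<close> Suc part2_other eqon_empty[OF w'E uE] by simp
              then show ?thesis using u(1) by blast
            qed
          qed
        qed
        show "U \<inter> Y k \<noteq> {}" using w'Y w'U by blast
      qed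
      then show "\<exists>x\<in>T closure_of (Y k). eqon (A k) z x" using exz eqon_sym by blast
    qed
    then show "z \<in> conc_sets E smul A (\<lambda>k. T closure_of (Y k))" using chC zE by blast
  next
    fix z assume z: "z \<in> conc_sets E smul A (\<lambda>k. T closure_of (Y k))"
    have zE: "z \<in> E" using z chC by blast
    have "\<forall>k. \<exists>x. x \<in> T closure_of (Y k) \<and> eqon (A k) z x" using z chC by blast
    then obtain xs where xs: "\<And>k. xs k \<in> T closure_of (Y k)" "\<And>k. eqon (A k) z (xs k)" by metis
    have zS: "z \<in> S" using conc_sets_S[of A "\<lambda>k. T closure_of (Y k)", OF A clS] z by blast
    show "z \<in> T closure_of (conc_sets E smul A Y)" unfolding in_closure[OF CS]
    proof (intro conjI ballI impI zS)
      fix U assume U: "U \<in> Bs" "z \<in> U"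
      have "\<forall>k. \<exists>y. y \<in> Y k \<and> (\<exists>u\<in>U. eqon (A k) y u)"
      proof
        fix k
        have xk: "xs k \<in> S" using xs(1) closure_sub by blast
        obtain U' where U': "U' \<in> Bs" "xs k \<in> U'" "\<forall>u'\<in>U'. \<exists>u\<in>U. eqon (A k) u' u"
          using nbhd_transfer[OF U(1) U(2) xk Ak xs(2)[THEN eqon_sym]] by blast
        obtain y where "y \<in> U'" "y \<in> Y k" using xs(1)[of k] U' unfolding in_closure[OF YS] by blast
        then show "\<exists>y. y \<in> Y k \<and> (\<exists>u\<in>U. eqon (A k) y u)" using U'(3) by blast
      qed
      then obtain ys where ys: "\<And>k. ys k \<in> Y k" "\<And>k. \<exists>u\<in>U. eqon (A k) (ys k) u" by metis
      have ysE: "\<And>k. ys k \<in> E" using ys(1) YE by blast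
      define w where "w = conc E smul A ys"
      have wE: "w \<in> E" unfolding w_def by (rule conc(1)[OF A ysE])
      have wC: "w \<in> conc_sets E smul A Y" unfolding w_def conc_sets_def using ys(1) by blast
      have "w \<in> U"
      proof (rule locality[OF Bs_stable[OF U(1)] A wE])
        fix k
        obtain u where u: "u \<in> U" "eqon (A k) (ys k) u" using ys(2) by blast
        have "eqon (A k) w (ys k)" using conc(2)[of A ys, OF A ysE] w_def by simp
        then show "\<exists>v\<in>U. eqon (A k) w v" using u unfolding eqon_def by auto
      qed
      then show "U \<inter> conc_sets E smul A Y \<noteq> {}" using wC by blast
    qed
  qed
qed

lemma closure_stable: assumes Y: "stable_set M E smul Y" and YS: "Y \<subseteq> S"
  shows "stable_set M E smul (T closure_of Y)"
proof -
  have ne: "T closure_of Y \<noteq> {}" using stable_ne[OF Y] closure_of_subset[of Y T] YS top by auto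
  have sub: "T closure_of Y \<subseteq> E" using closure_sub SE by blast
  have "\<And>A xs. meas_partition M A \<Longrightarrow> (\<forall>k. xs k \<in> T closure_of Y) \<Longrightarrow> conc E smul A xs \<in> T closure_of Y"
  proof -
    fix A :: "nat \<Rightarrow> 'w set" and xs :: "nat \<Rightarrow> 'e" assume A: "meas_partition M A" and xs: "\<forall>k. xs k \<in> T closure_of Y"
    have "conc E smul A xs \<in> conc_sets E smul A (\<lambda>k. T closure_of Y)" unfolding conc_sets_def using xs by blast
    also have "\<dots> = T closure_of (conc_sets E smul A (\<lambda>_. Y))"
      by (rule closure_conc_sets[symmetric, OF A]) (use Y YS in auto)
    also have "\<dots> = T closure_of Y" using conc_sets_const[OF Y A] by simp
    finally show "conc E smul A xs \<in> T closure_of Y" .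
  qed
  then show ?thesis unfolding stable_set_def using ne sub by blast
qed

end

context stabtop begin

lemma sf_filter: "stable_filter M E smul S \<F> \<Longrightarrow> filter_on S \<F>" unfolding stable_filter_def by blast

lemma filter_inter: "filter_on S \<F> \<Longrightarrow> X \<in> \<F> \<Longrightarrow> Y \<in> \<F> \<Longrightarrow> X \<inter> Y \<in> \<F>"
  unfolding filter_on_def by blast

lemma filter_sub: "filter_on S \<F> \<Longrightarrow> X \<in> \<F> \<Longrightarrow> X \<subseteq> S"
  unfolding filter_on_def by blast

lemma filter_ne: "filter_on S \<F> \<Longrightarrow> X \<in> \<F> \<Longrightarrow> X \<noteq> {}"
  unfolding filter_on_def by blast

lemma filter_finite_inter: assumes F: "filter_on S \<F>" and fin: "finite \<X>" and ne: "\<X> \<noteq> {}" and sub: "\<X> \<subseteq> \<F>"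
  shows "\<Inter>\<X> \<in> \<F>"
  using fin ne sub
proof (induction \<X> rule: finite_ne_induct)
  case (singleton x) then show ?case by simp
next
  case (insert x F') then show ?case using filter_inter[OF F] by simp
qed

lemma Inter_stable: assumes ne: "\<X> \<noteq> {}" and st: "\<And>X. X \<in> \<X> \<Longrightarrow> stable_set M E smul X" and ine: "\<Inter>\<X> \<noteq> {}"
  shows "stable_set M E smul (\<Inter>\<X>)"
proof -
  have sub: "\<Inter>\<X> \<subseteq> E" using ne st stable_sub by blast
  have "\<And>A xs. meas_partition M A \<and> (\<forall>k. xs k \<in> \<Inter>\<X>) \<longrightarrow> conc E smul A xs \<in> \<Inter>\<X>"
    using st stable_conc by blast
  then show ?thesis unfolding stable_set_def using sub ine by blast
qed

lemma iv_imp_i: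
  assumes iv: "\<forall>\<C>. stable_coll M E smul \<C> \<and> (\<forall>C\<in>\<C>. closedin T C) \<and>
                  (\<forall>\<C>'. stable_finite_sub M E smul \<C> \<C>' \<longrightarrow> \<Inter>\<C>' \<noteq> {}) \<longrightarrow> \<Inter>\<C> \<noteq> {}"
  shows "stable_compact M E smul T S"
  unfolding stable_compact_def
proof (intro allI impI)
  fix \<F> assume sF: "stable_filter M E smul S \<F>"
  have F: "filter_on S \<F>" using sf_filter[OF sF] .
  obtain \<B> where B: "stable_coll M E smul \<B>" "filter_base \<F> \<B>" using sF unfolding stable_filter_def by blast
  have BF: "\<B> \<subseteq> \<F>" using B(2) unfolding filter_base_def by blast
  have BS: "\<And>b. b \<in> \<B> \<Longrightarrow> b \<subseteq> S" using BF filter_sub[OF F] by blast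
  have Bst: "\<And>b. b \<in> \<B> \<Longrightarrow> stable_set M E smul b" using sc_stable[OF B(1)] .
  define \<C> where "\<C> = (\<lambda>b. T closure_of b) ` \<B>"
  have Cst: "stable_coll M E smul \<C>"
    unfolding stable_coll_def
  proof (intro conjI allI impI ballI)
    show "\<C> \<noteq> {}" using sc_ne[OF B(1)] unfolding \<C>_def by blast
    fix X assume "X \<in> \<C>" then show "stable_set M E smul X" unfolding \<C>_def using closure_stable Bst BS by blast
  next
    fix A :: "nat \<Rightarrow> 'w set" and Y :: "nat \<Rightarrow> 'e set" assume h: "meas_partition M A \<and> (\<forall>k. Y k \<in> \<C>)"
    then have A: "meas_partition M A" by blast
    have "\<forall>k. \<exists>b. b \<in> \<B> \<and> Y k = T closure_of b" using h unfolding \<C>_def by blast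
    then obtain b where b: "\<And>k. b k \<in> \<B>" "\<And>k. Y k = T closure_of (b k)" by metis
    have "Y = (\<lambda>k. T closure_of (b k))" using b(2) by (intro ext) simp
    then have "conc_sets E smul A Y = T closure_of (conc_sets E smul A b)"
      using closure_conc_sets[OF A, of b] Bst BS b(1) by simp
    moreover have "conc_sets E smul A b \<in> \<B>" by (rule sc_conc[OF B(1) A b(1)])
    ultimately show "conc_sets E smul A Y \<in> \<C>" unfolding \<C>_def by blast
  qed
  have Ccl: "\<forall>C\<in>\<C>. closedin T C" unfolding \<C>_def by auto
  have "\<forall>c\<in>\<C>. \<exists>b. b \<in> \<B> \<and> c = T closure_of b" unfolding \<C>_def by blast
  then obtain g where g: "\<And>c. c \<in> \<C> \<Longrightarrow> g c \<in> \<B> \<and> c = T closure_of (g c)" by metis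
  have fip: "\<forall>\<C>'. stable_finite_sub M E smul \<C> \<C>' \<longrightarrow> \<Inter>\<C>' \<noteq> {}"
  proof (intro allI impI)
    fix \<C>' assume "stable_finite_sub M E smul \<C> \<C>'"
    then obtain A Os where d: "okdat \<C> A Os" and C': "\<C>' = Odat A Os" using sfs_Odat by blast
    have A: "meas_partition M A" using d unfolding okdat_def by blast
    have "\<forall>k. \<exists>y. y \<in> E \<and> (\<forall>c\<in>Os k. y \<in> c)"
    proof
      fix k
      have Osk: "finite (Os k)" "Os k \<noteq> {}" "Os k \<subseteq> \<C>" using d unfolding okdat_def by auto
      have "\<Inter>(g ` Os k) \<in> \<F>"
        by (rule filter_finite_inter[OF F]) (use Osk g BF in auto)
      then obtain b' where b': "b' \<in> \<B>" "b' \<subseteq> \<Inter>(g ` Os k)" using B(2) unfolding filter_base_def by blast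
      obtain y where y: "y \<in> b'" using stable_ne[OF Bst[OF b'(1)]] by blast
      have "\<forall>c\<in>Os k. y \<in> c"
      proof
        fix c assume c: "c \<in> Os k"
        have gc: "g c \<in> \<B>" "c = T closure_of (g c)" using g c Osk(3) by auto
        have "y \<in> g c" using y b'(2) c by blast
        then show "y \<in> c" using gc closure_of_subset[of "g c" T] BS[OF gc(1)] top by auto
      qed
      moreover have "y \<in> E" using y BS[OF b'(1)] SE by blast
      ultimately show "\<exists>y. y \<in> E \<and> (\<forall>c\<in>Os k. y \<in> c)" by blast
    qed
    then obtain ys where ys: "\<And>k. ys k \<in> E" "\<And>k c. c \<in> Os k \<Longrightarrow> ys k \<in> c" by metis
    define z where "z = conc E smul A ys"
    have "z \<in> \<Inter>\<C>'"
    proof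
      fix W assume "W \<in> \<C>'"
      then obtain V where W: "W = conc_sets E smul A V" "\<And>k. V k \<in> st M E smul (Os k)" using C' Odat_elem by blast
      have "\<And>k. ys k \<in> V k"
      proof -
        fix k
        obtain B' U where BU: "V k = conc_sets E smul B' U" "meas_partition M B'" "\<And>j. U j \<in> Os k"
          using W(2)[of k] unfolding st_def by blast
        have UE: "\<And>j. U j \<subseteq> E" using BU(3) okdat_stable[OF Cst d] stable_sub by blast
        show "ys k \<in> V k" unfolding BU(1) conc_sets_char[OF BU(2) UE]
          using ys(1) ys(2)[OF BU(3)] eqon_refl by blast
      qed
      then show "z \<in> W" unfolding W(1) z_def conc_sets_def by blast
    qed
    then show "\<Inter>\<C>' \<noteq> {}" by blast
  qed
  have "\<Inter>\<C> \<noteq> {}" using iv Cst Ccl fip by blast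
  then obtain x where x: "x \<in> \<Inter>\<C>" by blast
  obtain b0 where b0: "b0 \<in> \<B>" using sc_ne[OF B(1)] by blast
  have xS: "x \<in> S" using x b0 closure_sub unfolding \<C>_def by blast
  have "cluster_point T \<F> x" unfolding cluster_point_def
  proof (intro conjI allI impI)
    show "x \<in> topspace T" using xS top by simp
    fix U X assume h: "openin T U \<and> x \<in> U \<and> X \<in> \<F>"
    then obtain b where b: "b \<in> \<B>" "b \<subseteq> X" using B(2) unfolding filter_base_def by blast
    have "x \<in> T closure_of b" using x b(1) unfolding \<C>_def by blast
    then have "\<exists>y\<in>b. y \<in> U" using h unfolding in_closure_of by blast
    then show "U \<inter> X \<noteq> {}" using b(2) by blast
  qed
  then show "\<exists>x\<in>S. cluster_point T \<F> x" using xS by blast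
qed


lemma i_imp_iv:
  assumes i: "stable_compact M E smul T S"
    and Cst: "stable_coll M E smul \<C>" and Ccl: "\<forall>C\<in>\<C>. closedin T C"
    and fip: "\<forall>\<C>'. stable_finite_sub M E smul \<C> \<C>' \<longrightarrow> \<Inter>\<C>' \<noteq> {}"
  shows "\<Inter>\<C> \<noteq> {}"
proof -
  have CS: "\<And>C. C \<in> \<C> \<Longrightarrow> C \<subseteq> S" using Ccl closedin_subset top by blast
  have Cs: "\<And>C. C \<in> \<C> \<Longrightarrow> stable_set M E smul C" using sc_stable[OF Cst] .
  have fip': "\<And>A Os. okdat \<C> A Os \<Longrightarrow> \<Inter>(Odat A Os) \<noteq> {}" using fip Odat_sfs[OF Cst] by blast
  have IS: "\<And>A Os. okdat \<C> A Os \<Longrightarrow> \<Inter>(Odat A Os) \<subseteq> S"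
  proof -
    fix A Os assume d: "okdat \<C> A Os"
    obtain W where "W \<in> Odat A Os" using Odat_ne[OF Cst d] by blast
    then show "\<Inter>(Odat A Os) \<subseteq> S" using Odat_sub[OF Cst d] CS by blast
  qed
  have Ist: "\<And>A Os. okdat \<C> A Os \<Longrightarrow> stable_set M E smul (\<Inter>(Odat A Os))"
    using Inter_stable Odat_ne[OF Cst] Odat_stable[OF Cst] fip' by metis
  obtain C0 where C0: "C0 \<in> \<C>" using sc_ne[OF Cst] by blast
  define \<F> where "\<F> = {X. X \<subseteq> S \<and> (\<exists>A Os. okdat \<C> A Os \<and> \<Inter>(Odat A Os) \<subseteq> X)}"
  define \<B> where "\<B> = {X \<in> \<F>. stable_set M E smul X}"
  have single: "\<And>C. C \<in> \<C> \<Longrightarrow> okdat \<C> triv (\<lambda>_. {C}) \<and> \<Inter>(Odat triv (\<lambda>_. {C})) = C"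
    using okdat_triv Odat_single Cs by simp
  have SF: "S \<in> \<F>" unfolding \<F>_def using single[OF C0] CS[OF C0] by blast
  have Ffil: "filter_on S \<F>" unfolding filter_on_def
  proof (intro conjI ballI allI impI)
    show "S \<in> \<F>" by (rule SF)
    show "{} \<notin> \<F>" unfolding \<F>_def using fip' by blast
    fix X assume X: "X \<in> \<F>"
    then show "X \<subseteq> S" unfolding \<F>_def by blast
    {
      fix Y assume Y: "Y \<in> \<F>"
      obtain A1 Os1 where d1: "okdat \<C> A1 Os1" "\<Inter>(Odat A1 Os1) \<subseteq> X" using X unfolding \<F>_def by blast
      obtain A2 Os2 where d2: "okdat \<C> A2 Os2" "\<Inter>(Odat A2 Os2) \<subseteq> Y" using Y unfolding \<F>_def by blast
      note r = Odat_refine[OF Cst d1(1) d2(1)]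
      have "\<Inter>(Odat (refpart A1 (\<lambda>_. A2)) (\<lambda>n. Os1 (fst (prod_decode n)) \<union> Os2 (snd (prod_decode n)))) \<subseteq> X \<inter> Y"
        using r(2,3) d1(2) d2(2) by blast
      then show "X \<inter> Y \<in> \<F>" unfolding \<F>_def using r(1) X Y unfolding \<F>_def by blast
    }
    fix G assume "X \<subseteq> G \<and> G \<subseteq> S" then show "G \<in> \<F>" using X unfolding \<F>_def by blast
  qed
  have Bfb: "filter_base \<F> \<B>" unfolding filter_base_def
  proof (intro conjI ballI)
    show "\<B> \<subseteq> \<F>" unfolding \<B>_def by blast
    fix X assume X: "X \<in> \<F>"
    then obtain A Os where d: "okdat \<C> A Os" "\<Inter>(Odat A Os) \<subseteq> X" unfolding \<F>_def by blast
    have "\<Inter>(Odat A Os) \<in> \<B>" unfolding \<B>_def \<F>_def using d(1) IS Ist by blast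
    then show "\<exists>B\<in>\<B>. B \<subseteq> X" using d(2) by blast
  qed
  have Bsc: "stable_coll M E smul \<B>" unfolding stable_coll_def
  proof (intro conjI allI impI ballI)
    show "\<B> \<noteq> {}" unfolding \<B>_def using SF Sst by blast
    fix X assume "X \<in> \<B>" then show "stable_set M E smul X" unfolding \<B>_def by blast
  next
    fix A :: "nat \<Rightarrow> 'w set" and X :: "nat \<Rightarrow> 'e set" assume h: "meas_partition M A \<and> (\<forall>k. X k \<in> \<B>)"
    then have A: "meas_partition M A" and XB: "\<And>k. X k \<in> \<B>" by auto
    have Xs: "\<And>k. stable_set M E smul (X k)" using XB unfolding \<B>_def by blast
    have XS: "\<And>k. X k \<subseteq> S" using XB unfolding \<B>_def \<F>_def by blast
    have "\<forall>k. \<exists>p. okdat \<C> (fst p) (snd p) \<and> \<Inter>(Odat (fst p) (snd p)) \<subseteq> X k"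
      using XB unfolding \<B>_def \<F>_def by force
    then obtain f where f: "\<And>k. okdat \<C> (fst (f k)) (snd (f k)) \<and> \<Inter>(Odat (fst (f k)) (snd (f k))) \<subseteq> X k"
      by metis
    define A' where "A' = (\<lambda>k. fst (f k))"
    define Os' where "Os' = (\<lambda>k. snd (f k))"
    have d: "\<And>k. okdat \<C> (A' k) (Os' k)" and dX: "\<And>k. \<Inter>(Odat (A' k) (Os' k)) \<subseteq> X k"
      using f unfolding A'_def Os'_def by auto
    note cmb = Odat_combine[OF Cst A d]
    define A'' where "A'' = refpart A A'"
    define Os'' where "Os'' = (\<lambda>m. Os' (fst (prod_decode m)) (snd (prod_decode m)))"
    have d'': "okdat \<C> A'' Os''" using cmb(1) unfolding A''_def Os''_def .
    have key: "\<Inter>(Odat A'' Os'') \<subseteq> conc_sets E smul A X"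
    proof
      fix z assume z: "z \<in> \<Inter>(Odat A'' Os'')"
      have zS: "z \<in> S" using z IS[OF d''] by blast
      have zE: "z \<in> E" using zS SE by blast
      have XE: "\<And>k. X k \<subseteq> E" using XS SE by blast
      have "\<forall>k. \<exists>y\<in>X k. eqon (A k) z y"
      proof
        fix k
        have Ak: "A k \<in> sets M" using mp_sets[OF A] .
        obtain p where p: "p \<in> \<Inter>(Odat (A' k) (Os' k))" using fip'[OF d[of k]] by blast
        have pE: "p \<in> E" using p IS[OF d[of k]] SE by blast
        define xs where "xs = (\<lambda>n::nat. if n = 0 then p else z)"
        have xsE: "\<And>n. xs n \<in> E" using pE zE unfolding xs_def by simp
        have P: "meas_partition M (part2 (A k))" by (rule part2_mp[OF Ak])
        define y where "y = conc E smul (part2 (A k)) xs"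
        have yE: "y \<in> E" unfolding y_def by (rule conc(1)[OF P xsE])
        have ey1: "eqon (A k) y z" using conc(2)[of "part2 (A k)" xs, OF P xsE, of "Suc 0"] unfolding y_def part2_1 xs_def by simp
        have ey0: "eqon (space M - A k) y p" using conc(2)[of "part2 (A k)" xs, OF P xsE, of 0] unfolding y_def part2_0 xs_def by simp
        have "y \<in> \<Inter>(Odat (A' k) (Os' k))"
        proof
          fix W assume W: "W \<in> Odat (A' k) (Os' k)"
          have Ws: "stable_set M E smul W" by (rule Odat_stable[OF Cst d W])
          have WE: "W \<subseteq> E" using stable_sub[OF Ws] .
          have "\<forall>m. \<exists>V. V \<in> Odat (A' m) (Os' m)" using Odat_ne[OF Cst d] by blast
          then obtain V0 where V0: "\<And>m. V0 m \<in> Odat (A' m) (Os' m)" by metis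
          define Wf where "Wf = (\<lambda>m. if m = k then W else V0 m)"
          have Wf: "\<And>m. Wf m \<in> Odat (A' m) (Os' m)" using W V0 unfolding Wf_def by simp
          have WfE: "\<And>m. Wf m \<subseteq> E" using Odat_stable[OF Cst d Wf] stable_sub by blast
          have "conc_sets E smul A Wf \<in> Odat A'' Os''" using cmb(2)[OF Wf] unfolding A''_def Os''_def .
          then have "z \<in> conc_sets E smul A Wf" using z by blast
          then have "\<exists>w\<in>Wf k. eqon (A k) z w" unfolding conc_sets_char[OF A WfE] by blast
          then obtain w where w: "w \<in> W" "eqon (A k) z w" unfolding Wf_def by auto
          have wE: "w \<in> E" using w(1) WE by blast
          have pW: "p \<in> W" using p W by blast
          show "y \<in> W"
          proof (rule locality[OF Ws P yE])
            fix n show "\<exists>v\<in>W. eqon (part2 (A k) n) y v"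
            proof (cases n)
              case 0 then show ?thesis using ey0 pW part2_0 by auto
            next
              case (Suc m) then show ?thesis
              proof (cases m)
                case 0 then show ?thesis using ey1 w \<open>n = Suc m\<close> part2_1 unfolding eqon_def by auto
              next
                case (Suc m')
                have "eqon (part2 (A k) n) y p" using \<open>n = Suc m\<close> Suc part2_other eqon_empty[OF yE pE] by simp
                then show ?thesis using pW by blast
              qed
            qed
          qed
        qed
        then have "y \<in> X k" using dX by blast
        then show "\<exists>y\<in>X k. eqon (A k) z y" using ey1 eqon_sym by blast
      qed
      then show "z \<in> conc_sets E smul A X" unfolding conc_sets_char[OF A XE] using zE by blast
    qed
    have "conc_sets E smul A X \<in> \<F>" unfolding \<F>_def using conc_sets_S[of A X, OF A XS] d'' key by blast
    moreover have "stable_set M E smul (conc_sets E smul A X)" by (rule conc_sets_stable[OF A Xs])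
    ultimately show "conc_sets E smul A X \<in> \<B>" unfolding \<B>_def by blast
  qed
  have "stable_filter M E smul S \<F>" unfolding stable_filter_def using Ffil Bsc Bfb by blast
  then obtain x where x: "x \<in> S" "cluster_point T \<F> x" using i unfolding stable_compact_def by blast
  have "x \<in> \<Inter>\<C>"
  proof
    fix C assume C: "C \<in> \<C>"
    show "x \<in> C"
    proof (rule ccontr)
      assume nx: "x \<notin> C"
      have U: "openin T (S - C)" using Ccl C top unfolding closedin_def by auto
      have "C \<in> \<F>" unfolding \<F>_def using single[OF C] CS[OF C] by blast
      then have "(S - C) \<inter> C \<noteq> {}" using x(2) U nx x(1) unfolding cluster_point_def by blast
      then show False by blast
    qed
  qed
  then show ?thesis by blast
qed

end

context stabtop begin

lemma sf_base: "stable_filter M E smul S \<F> \<Longrightarrow> X \<in> \<F> \<Longrightarrow> \<exists>b\<in>\<F>. stable_set M E smul b \<and> b \<subseteq> X"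
  unfolding stable_filter_def filter_base_def stable_coll_def by blast

lemma chain_ub:
  assumes K: "\<K> \<noteq> {}" "\<And>G. G \<in> \<K> \<Longrightarrow> stable_filter M E smul S G"
    and ch: "\<And>G1 G2. G1 \<in> \<K> \<Longrightarrow> G2 \<in> \<K> \<Longrightarrow> G1 \<subseteq> G2 \<or> G2 \<subseteq> G1"
  shows "\<exists>U. stable_filter M E smul S U \<and> (\<forall>G\<in>\<K>. G \<subseteq> U)"
proof -
  define SK where "SK = {Y. Y \<in> \<Union>\<K> \<and> stable_set M E smul Y}"
  have SKS: "\<And>Y. Y \<in> SK \<Longrightarrow> Y \<subseteq> S"
  proof -
    fix Y assume "Y \<in> SK"
    then obtain G where G: "G \<in> \<K>" "Y \<in> G" unfolding SK_def by blast
    show "Y \<subseteq> S" by (rule filter_sub[OF sf_filter[OF K(2)[OF G(1)]] G(2)])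
  qed
  have SKs: "\<And>Y. Y \<in> SK \<Longrightarrow> stable_set M E smul Y" unfolding SK_def by blast
  define \<B> where "\<B> = {conc_sets E smul A Y | A Y. meas_partition M A \<and> (\<forall>k. Y k \<in> SK)}"
  define U where "U = {X. X \<subseteq> S \<and> (\<exists>b\<in>\<B>. b \<subseteq> X)}"
  have Bst: "\<And>b. b \<in> \<B> \<Longrightarrow> stable_set M E smul b"
  proof -
    fix b assume "b \<in> \<B>"
    then obtain A Y where AY: "b = conc_sets E smul A Y" "meas_partition M A" "\<And>k. Y k \<in> SK" unfolding \<B>_def by blast
    have "\<And>k. stable_set M E smul (Y k)" using AY(3) SKs by blast
    then show "stable_set M E smul b" using conc_sets_stable[OF AY(2)] AY(1) by simp
  qed
  have BS: "\<And>b. b \<in> \<B> \<Longrightarrow> b \<subseteq> S"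
  proof -
    fix b assume "b \<in> \<B>"
    then obtain A Y where "b = conc_sets E smul A Y" "meas_partition M A" "\<And>k. Y k \<in> SK" unfolding \<B>_def by blast
    then show "b \<subseteq> S" using conc_sets_S[of A Y] SKS by simp
  qed
  have SKB: "\<And>Y. Y \<in> SK \<Longrightarrow> Y \<in> \<B>"
  proof -
    fix Y assume Y: "Y \<in> SK"
    have "Y = conc_sets E smul triv (\<lambda>_. Y)" using conc_sets_const[OF SKs[OF Y] triv_mp] by simp
    then show "Y \<in> \<B>" unfolding \<B>_def
      by (intro CollectI exI[of _ triv] exI[of _ "\<lambda>_. Y"]) (use triv_mp Y in auto)
  qed
  have inK: "\<And>G X. G \<in> \<K> \<Longrightarrow> X \<in> G \<Longrightarrow> \<exists>b\<in>\<B>. b \<subseteq> X"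
  proof -
    fix G X assume G: "G \<in> \<K>" and X: "X \<in> G"
    obtain b where "b \<in> G" "stable_set M E smul b" "b \<subseteq> X" using sf_base[OF K(2)[OF G] X] by blast
    then show "\<exists>b\<in>\<B>. b \<subseteq> X" using SKB G unfolding SK_def by blast
  qed
  obtain G0 where G0: "G0 \<in> \<K>" using K(1) by blast
  have "S \<in> G0" using sf_filter[OF K(2)[OF G0]] unfolding filter_on_def by blast
  then obtain bS where "bS \<in> \<B>" "bS \<subseteq> S" using inK[OF G0] by blast
  then have SU: "S \<in> U" unfolding U_def by blast
  have Bsc: "stable_coll M E smul \<B>" unfolding stable_coll_def
  proof (intro conjI allI impI ballI)
    show "\<B> \<noteq> {}" using SU unfolding U_def by blast
    fix b assume "b \<in> \<B>" then show "stable_set M E smul b" by (rule Bst)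
  next
    fix A :: "nat \<Rightarrow> 'w set" and Y :: "nat \<Rightarrow> 'e set" assume h: "meas_partition M A \<and> (\<forall>k. Y k \<in> \<B>)"
    then have A: "meas_partition M A" by blast
    have "\<forall>k. \<exists>p. Y k = conc_sets E smul (fst p) (snd p) \<and> meas_partition M (fst p) \<and> (\<forall>j. snd p j \<in> SK)"
    proof
      fix k
      obtain B' Z where "Y k = conc_sets E smul B' Z" "meas_partition M B'" "\<forall>j. Z j \<in> SK"
        using h unfolding \<B>_def by blast
      then show "\<exists>p. Y k = conc_sets E smul (fst p) (snd p) \<and> meas_partition M (fst p) \<and> (\<forall>j. snd p j \<in> SK)"
        by (intro exI[of _ "(B', Z)"]) simp
    qed
    then obtain f where f: "\<And>k. Y k = conc_sets E smul (fst (f k)) (snd (f k)) \<and> meas_partition M (fst (f k)) \<and> (\<forall>j. snd (f k) j \<in> SK)"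
      by metis
    define B' where "B' = (\<lambda>k. fst (f k))"
    define Z where "Z = (\<lambda>k. snd (f k))"
    have BZ: "\<And>k. Y k = conc_sets E smul (B' k) (Z k)" "\<And>k. meas_partition M (B' k)" "\<And>k j. Z k j \<in> SK"
      using f unfolding B'_def Z_def by blast+
    have ZE: "\<And>k j. Z k j \<subseteq> E" using BZ(3) SKS SE by blast
    have "Y = (\<lambda>k. conc_sets E smul (B' k) (Z k))" by (intro ext) (rule BZ(1))
    then have "conc_sets E smul A Y = conc_sets E smul (refpart A B') (\<lambda>n. Z (fst (prod_decode n)) (snd (prod_decode n)))"
      using conc_sets_assoc[OF A BZ(2) ZE] by simp
    then show "conc_sets E smul A Y \<in> \<B>" unfolding \<B>_def
      by (intro CollectI exI[of _ "refpart A B'"] exI[of _ "\<lambda>n. Z (fst (prod_decode n)) (snd (prod_decode n))"])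
        (use refpart_mp[OF A BZ(2)] BZ(3) in auto)
  qed
  have inter: "\<And>b1 b2. b1 \<in> \<B> \<Longrightarrow> b2 \<in> \<B> \<Longrightarrow> \<exists>b3\<in>\<B>. b3 \<subseteq> b1 \<inter> b2"
  proof -
    fix b1 b2 assume "b1 \<in> \<B>" "b2 \<in> \<B>"
    then obtain A1 Y1 A2 Y2 where b1: "b1 = conc_sets E smul A1 Y1" "meas_partition M A1" "\<And>k. Y1 k \<in> SK"
      and b2: "b2 = conc_sets E smul A2 Y2" "meas_partition M A2" "\<And>k. Y2 k \<in> SK" unfolding \<B>_def by blast
    have "\<forall>k j. \<exists>c. c \<in> SK \<and> c \<subseteq> Y1 k \<inter> Y2 j"
    proof (intro allI)
      fix k j
      obtain G1 where G1: "G1 \<in> \<K>" "Y1 k \<in> G1" using b1(3)[of k] unfolding SK_def by blast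
      obtain G2 where G2: "G2 \<in> \<K>" "Y2 j \<in> G2" using b2(3)[of j] unfolding SK_def by blast
      obtain G where G: "G \<in> \<K>" "Y1 k \<in> G" "Y2 j \<in> G" using ch[OF G1(1) G2(1)] G1 G2 by blast
      have "Y1 k \<inter> Y2 j \<in> G" using filter_inter[OF sf_filter[OF K(2)[OF G(1)]] G(2,3)] .
      then obtain c where "c \<in> G" "stable_set M E smul c" "c \<subseteq> Y1 k \<inter> Y2 j" using sf_base[OF K(2)[OF G(1)]] by blast
      then show "\<exists>c. c \<in> SK \<and> c \<subseteq> Y1 k \<inter> Y2 j" using G(1) unfolding SK_def by blast
    qed
    then obtain c where c: "\<And>k j. c k j \<in> SK" "\<And>k j. c k j \<subseteq> Y1 k \<inter> Y2 j" by metis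
    have cE: "\<And>k j. c k j \<subseteq> E" using c(1) SKS SE by blast
    have Y1s: "\<And>k. stable_set M E smul (Y1 k)" using b1(3) SKs by blast
    have Y2s: "\<And>k. stable_set M E smul (Y2 k)" using b2(3) SKs by blast
    have Y2E: "\<And>n k. (\<lambda>n k. Y2 n) n k \<subseteq> E" using Y2s stable_sub by blast
    define b3 where "b3 = conc_sets E smul A1 (\<lambda>k. conc_sets E smul ((\<lambda>_. A2) k) (c k))"
    have "b3 = conc_sets E smul (refpart A1 (\<lambda>_. A2)) (\<lambda>n. c (fst (prod_decode n)) (snd (prod_decode n)))"
      unfolding b3_def by (rule conc_sets_assoc[OF b1(2) b2(2) cE])
    then have b3B: "b3 \<in> \<B>" unfolding \<B>_def
      by (intro CollectI exI[of _ "refpart A1 (\<lambda>_. A2)"] exI[of _ "\<lambda>n. c (fst (prod_decode n)) (snd (prod_decode n))"])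
        (use refpart_mp[OF b1(2) b2(2)] c(1) in auto)
    have "b3 \<subseteq> conc_sets E smul A1 (\<lambda>k. conc_sets E smul A2 (\<lambda>_. Y1 k))"
      unfolding b3_def by (intro conc_sets_mono) (use c(2) in auto)
    also have "\<dots> = b1" using conc_sets_const[OF Y1s b2(2)] b1(1) by simp
    finally have s1: "b3 \<subseteq> b1" .
    have "b3 \<subseteq> conc_sets E smul A1 (\<lambda>k. conc_sets E smul A2 (\<lambda>n. (\<lambda>n k. Y2 n) n k))"
      unfolding b3_def by (intro conc_sets_mono) (use c(2) in auto)
    also have "\<dots> = conc_sets E smul A2 (\<lambda>n. conc_sets E smul A1 ((\<lambda>n k. Y2 n) n))"
      by (rule conc_sets_comm[OF b1(2) b2(2) Y2E, symmetric])
    also have "\<dots> = b2" using conc_sets_const[OF Y2s b1(2)] b2(1) by simp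
    finally have s2: "b3 \<subseteq> b2" .
    show "\<exists>b3\<in>\<B>. b3 \<subseteq> b1 \<inter> b2" using b3B s1 s2 by blast
  qed
  have Ufil: "filter_on S U" unfolding filter_on_def
  proof (intro conjI ballI allI impI)
    show "S \<in> U" by (rule SU)
    show "{} \<notin> U"
    proof
      assume "{} \<in> U"
      then obtain b where "b \<in> \<B>" "b \<subseteq> {}" unfolding U_def by blast
      then show False using stable_ne[OF Bst] by blast
    qed
    fix X assume X: "X \<in> U"
    then show "X \<subseteq> S" unfolding U_def by blast
    {
      fix Y assume Y: "Y \<in> U"
      obtain b1 where b1: "b1 \<in> \<B>" "b1 \<subseteq> X" using X unfolding U_def by blast
      obtain b2 where b2: "b2 \<in> \<B>" "b2 \<subseteq> Y" using Y unfolding U_def by blast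
      obtain b3 where b3: "b3 \<in> \<B>" "b3 \<subseteq> b1 \<inter> b2" using inter[OF b1(1) b2(1)] by blast
      have "X \<inter> Y \<subseteq> S" using X unfolding U_def by blast
      moreover have "b3 \<subseteq> X \<inter> Y" using b3(2) b1(2) b2(2) by blast
      ultimately show "X \<inter> Y \<in> U" using b3(1) unfolding U_def by blast
    }
    fix G assume "X \<subseteq> G \<and> G \<subseteq> S" then show "G \<in> U" using X unfolding U_def by blast
  qed
  have fb: "filter_base U \<B>" unfolding filter_base_def
  proof (intro conjI ballI subsetI)
    fix b assume "b \<in> \<B>" then show "b \<in> U" unfolding U_def using BS by blast
  next
    fix X assume "X \<in> U" then show "\<exists>b\<in>\<B>. b \<subseteq> X" unfolding U_def by blast
  qed
  have sU: "stable_filter M E smul S U" unfolding stable_filter_def using Ufil Bsc fb by blast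
  have "\<forall>G\<in>\<K>. G \<subseteq> U"
  proof (intro ballI subsetI)
    fix G X assume G: "G \<in> \<K>" and X: "X \<in> G"
    have "X \<subseteq> S" using filter_sub[OF sf_filter[OF K(2)[OF G]] X] .
    then show "X \<in> U" unfolding U_def using inK[OF G X] by blast
  qed
  then show ?thesis using sU by blast
qed

lemma ii_imp_i:
  assumes ii: "\<forall>\<F>. stable_ultrafilter M E smul S \<F> \<longrightarrow> (\<exists>x\<in>S. cluster_point T \<F> x)"
  shows "stable_compact M E smul T S"
  unfolding stable_compact_def
proof (intro allI impI)
  fix F0 assume F0: "stable_filter M E smul S F0"
  define Z where "Z = {G. stable_filter M E smul S G \<and> F0 \<subseteq> G}"
  have "\<forall>\<K>\<in>chains Z. \<exists>U\<in>Z. \<forall>X\<in>\<K>. X \<subseteq> U"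
  proof
    fix \<K> assume K: "\<K> \<in> chains Z"
    show "\<exists>U\<in>Z. \<forall>X\<in>\<K>. X \<subseteq> U"
    proof (cases "\<K> = {}")
      case True then show ?thesis using F0 unfolding Z_def by blast
    next
      case False
      have KZ: "\<K> \<subseteq> Z" and KC: "\<And>G1 G2. G1 \<in> \<K> \<Longrightarrow> G2 \<in> \<K> \<Longrightarrow> G1 \<subseteq> G2 \<or> G2 \<subseteq> G1"
        using K unfolding chains_def chain_subset_def by blast+
      have KS: "\<And>G. G \<in> \<K> \<Longrightarrow> stable_filter M E smul S G" using KZ unfolding Z_def by blast
      obtain U where U: "stable_filter M E smul S U" "\<forall>G\<in>\<K>. G \<subseteq> U"
        using chain_ub[OF False KS KC] by blast
      obtain G where "G \<in> \<K>" using False by blast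
      then have "F0 \<subseteq> U" using KZ U(2) unfolding Z_def by blast
      then show ?thesis using U unfolding Z_def by blast
    qed
  qed
  from Zorn_Lemma2[OF this] obtain Mx where Mx0: "Mx \<in> Z" "\<forall>X\<in>Z. Mx \<subseteq> X \<longrightarrow> X = Mx" by blast
  then have Mx: "Mx \<in> Z" "\<And>X. X \<in> Z \<Longrightarrow> Mx \<subseteq> X \<Longrightarrow> X = Mx" by auto
  have uf: "stable_ultrafilter M E smul S Mx" unfolding stable_ultrafilter_def
  proof (intro conjI allI impI)
    show "stable_filter M E smul S Mx" using Mx(1) unfolding Z_def by blast
    fix G assume "stable_filter M E smul S G \<and> Mx \<subseteq> G"
    then have "G \<in> Z" "Mx \<subseteq> G" using Mx(1) unfolding Z_def by auto
    then show "G = Mx" by (rule Mx(2))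
  qed
  obtain x where x: "x \<in> S" "cluster_point T Mx x" using ii uf by blast
  have "F0 \<subseteq> Mx" using Mx(1) unfolding Z_def by blast
  then have "cluster_point T F0 x" using x(2) unfolding cluster_point_def by blast
  then show "\<exists>x\<in>S. cluster_point T F0 x" using x(1) by blast
qed

end

context stabtop begin

lemma null_partition: assumes A: "meas_partition M A" and D: "D \<in> sets M" and n: "\<And>k. D \<inter> A k \<in> null_sets M"
  shows "D \<in> null_sets M"
proof -
  have "D = (\<Union>k. D \<inter> A k)" using A sets.sets_into_space[OF D] unfolding meas_partition_def by blast
  also have "\<dots> \<in> null_sets M" using n by (rule null_sets_UN)
  finally show ?thesis .
qed

lemma pair_UN: fixes D :: "nat \<Rightarrow> 'w set"
  assumes U: "stable_set M E smul U" and b: "stable_set M E smul b" and D: "\<And>n. D n \<in> sets M"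
    and h: "\<And>n. \<exists>u\<in>U. \<exists>y\<in>b. eqon (D n) u y"
  shows "\<exists>u\<in>U. \<exists>y\<in>b. eqon (\<Union>n. D n) u y"
proof -
  have "\<forall>n. \<exists>p. fst p \<in> U \<and> snd p \<in> b \<and> eqon (D n) (fst p) (snd p)" using h by fastforce
  then obtain f where f: "\<And>n. fst (f n) \<in> U \<and> snd (f n) \<in> b \<and> eqon (D n) (fst (f n)) (snd (f n))" by metis
  obtain u0 where u0: "u0 \<in> U" using stable_ne[OF U] by blast
  obtain y0 where y0: "y0 \<in> b" using stable_ne[OF b] by blast
  define us where "us = (\<lambda>m. if m = 0 then u0 else fst (f (m - 1)))"
  define ys where "ys = (\<lambda>m. if m = 0 then y0 else snd (f (m - 1)))"
  have usU: "\<And>m. us m \<in> U" using u0 f unfolding us_def by simp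
  have ysb: "\<And>m. ys m \<in> b" using y0 f unfolding ys_def by simp
  have usE: "\<And>m. us m \<in> E" using usU stable_sub[OF U] by blast
  have ysE: "\<And>m. ys m \<in> E" using ysb stable_sub[OF b] by blast
  have P: "meas_partition M (seqpart D)" by (rule seqpart_mp[OF D])
  have Ps: "\<And>m. seqpart D m \<in> sets M" using mp_sets[OF P] .
  define u where "u = conc E smul (seqpart D) us"
  define y where "y = conc E smul (seqpart D) ys"
  have uU: "u \<in> U" unfolding u_def by (rule stable_conc[OF U P usU])
  have yb: "y \<in> b" unfolding y_def by (rule stable_conc[OF b P ysb])
  have uE: "u \<in> E" using uU stable_sub[OF U] by blast
  have yE: "y \<in> E" using yb stable_sub[OF b] by blast
  have e: "\<And>n. eqon (seqpart D (Suc n)) u y"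
  proof -
    fix n
    have 1: "eqon (seqpart D (Suc n)) u (fst (f n))" using conc(2)[of "seqpart D" us, OF P usE, of "Suc n"] unfolding u_def us_def by simp
    have 2: "eqon (seqpart D (Suc n)) y (snd (f n))" using conc(2)[of "seqpart D" ys, OF P ysE, of "Suc n"] unfolding y_def ys_def by simp
    have 3: "eqon (seqpart D (Suc n)) (fst (f n)) (snd (f n))"
      by (rule eqon_sub[OF conjunct2[OF conjunct2[OF f[of n]]] seqpart_sub D Ps]) (use usE ysE f U b stable_sub in blast)+
    show "eqon (seqpart D (Suc n)) u y" using 1 2 3 unfolding eqon_def by simp
  qed
  have "eqon (\<Union>n. seqpart D (Suc n)) u y" by (rule eqon_UN[of "\<lambda>n. seqpart D (Suc n)", OF Ps uE yE e])
  then show ?thesis unfolding seqpart_UN using uU yb by blast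
qed

definition perp :: "'w set \<Rightarrow> 'e set \<Rightarrow> 'e set \<Rightarrow> bool" where
  "perp D U b \<longleftrightarrow> (\<forall>u\<in>U. \<forall>y\<in>b. \<forall>D'. D' \<in> sets M \<and> D' \<subseteq> D \<and> eqon D' u y \<longrightarrow> D' \<in> null_sets M)"

definition clon :: "'e set set \<Rightarrow> 'e \<Rightarrow> 'w set \<Rightarrow> bool" where
  "clon \<B> x D \<longleftrightarrow> (\<forall>U\<in>Bs. x \<in> U \<longrightarrow> (\<forall>b\<in>\<B>. \<exists>u\<in>U. \<exists>y\<in>b. eqon D u y))"

lemma perp_empty: "perp {} U b" unfolding perp_def by auto

lemma clon_UN: fixes D :: "nat \<Rightarrow> 'w set"
  assumes Bc: "stable_coll M E smul \<B>" and D: "\<And>n. D n \<in> sets M" and x: "\<And>n. x n \<in> S"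
    and c: "\<And>n. clon \<B> (x n) (D n)"
  shows "\<exists>z\<in>S. clon \<B> z (\<Union>n. D n)"
proof -
  define xs where "xs = (\<lambda>m. if m = 0 then x 0 else x (m - 1))"
  have xsS: "\<And>m. xs m \<in> S" using x unfolding xs_def by simp
  have xsE: "\<And>m. xs m \<in> E" using xsS SE by blast
  have P: "meas_partition M (seqpart D)" by (rule seqpart_mp[OF D])
  have Ps: "\<And>m. seqpart D m \<in> sets M" using mp_sets[OF P] .
  define z where "z = conc E smul (seqpart D) xs"
  have zS: "z \<in> S" unfolding z_def by (rule stable_conc[OF Sst P xsS])
  have zx: "eqon (seqpart D (Suc n)) (x n) z" for n
  proof -
    have "eqon (seqpart D (Suc n)) z (xs (Suc n))" using conc(2)[of "seqpart D" xs, OF P xsE] unfolding z_def by blast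
    then show ?thesis unfolding xs_def eqon_def by simp
  qed
  have "clon \<B> z (\<Union>n. D n)" unfolding clon_def
  proof (intro ballI impI)
    fix U b assume U: "U \<in> Bs" "z \<in> U" and b: "b \<in> \<B>"
    have Us: "stable_set M E smul U" using Bs_stable[OF U(1)] .
    have bs: "stable_set M E smul b" using sc_stable[OF Bc b] .
    have "\<And>n. \<exists>u\<in>U. \<exists>y\<in>b. eqon (seqpart D (Suc n)) u y"
    proof -
      fix n
      obtain U' where U': "U' \<in> Bs" "x n \<in> U'" "\<forall>u'\<in>U'. \<exists>u\<in>U. eqon (seqpart D (Suc n)) u' u"
        using nbhd_transfer[OF U(1) U(2) x[of n] Ps zx[of n]] by blast
      have "\<exists>u\<in>U'. \<exists>y\<in>b. eqon (D n) u y" using c[of n] U'(1,2) b unfolding clon_def by blast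
      then obtain u' y where uy: "u' \<in> U'" "y \<in> b" "eqon (D n) u' y" by blast
      obtain u where u: "u \<in> U" "eqon (seqpart D (Suc n)) u' u" using U'(3) uy(1) by blast
      have u'E: "u' \<in> E" using uy(1) Bs_sub[OF U'(1)] SE by blast
      have yE: "y \<in> E" using uy(2) stable_sub[OF bs] by blast
      have "eqon (seqpart D (Suc n)) u' y" by (rule eqon_sub[OF uy(3) seqpart_sub D Ps u'E yE])
      then have "eqon (seqpart D (Suc n)) u y" using u(2) unfolding eqon_def by simp
      then show "\<exists>u\<in>U. \<exists>y\<in>b. eqon (seqpart D (Suc n)) u y" using u(1) uy(2) by blast
    qed
    then have "\<exists>u\<in>U. \<exists>y\<in>b. eqon (\<Union>n. seqpart D (Suc n)) u y"
      by (rule pair_UN[OF Us bs Ps])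
    then show "\<exists>u\<in>U. \<exists>y\<in>b. eqon (\<Union>n. D n) u y" unfolding seqpart_UN .
  qed
  then show ?thesis using zS by blast
qed

lemma perp_UN: fixes D :: "nat \<Rightarrow> 'w set"
  assumes Bc: "stable_coll M E smul \<B>" and D: "\<And>n. D n \<in> sets M"
    and h: "\<And>n. \<exists>U\<in>Bs. x \<in> U \<and> (\<exists>b\<in>\<B>. perp (D n) U b)"
  shows "\<exists>U\<in>Bs. x \<in> U \<and> (\<exists>b\<in>\<B>. perp (\<Union>n. D n) U b)"
proof -
  have "\<forall>n. \<exists>p. fst p \<in> Bs \<and> x \<in> fst p \<and> snd p \<in> \<B> \<and> perp (D n) (fst p) (snd p)" using h by fastforce
  then obtain f where f: "\<And>n. fst (f n) \<in> Bs \<and> x \<in> fst (f n) \<and> snd (f n) \<in> \<B> \<and> perp (D n) (fst (f n)) (snd (f n))" by metis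
  define Us where "Us = (\<lambda>m. if m = 0 then fst (f 0) else fst (f (m - 1)))"
  define bs where "bs = (\<lambda>m. if m = 0 then snd (f 0) else snd (f (m - 1)))"
  have UsB: "\<And>m. Us m \<in> Bs" using f unfolding Us_def by simp
  have bsB: "\<And>m. bs m \<in> \<B>" using f unfolding bs_def by simp
  have UsE: "\<And>m. Us m \<subseteq> E" using UsB Bs_sub SE by blast
  have bsE: "\<And>m. bs m \<subseteq> E" using bsB sc_stable[OF Bc] stable_sub by blast
  have P: "meas_partition M (seqpart D)" by (rule seqpart_mp[OF D])
  have Ps: "\<And>m. seqpart D m \<in> sets M" using mp_sets[OF P] .
  define U where "U = conc_sets E smul (seqpart D) Us"
  define b where "b = conc_sets E smul (seqpart D) bs"
  have UB: "U \<in> Bs" unfolding U_def by (rule sc_conc[OF Bs P UsB])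
  have bB: "b \<in> \<B>" unfolding b_def by (rule sc_conc[OF Bc P bsB])
  have xE: "x \<in> E" using f[of 0] Bs_sub SE by blast
  have xU: "x \<in> U" unfolding U_def conc_sets_char[OF P UsE] using xE f unfolding Us_def by (auto intro: eqon_refl)
  have "perp (\<Union>n. D n) U b" unfolding perp_def
  proof (intro ballI allI impI)
    fix u y D' assume u: "u \<in> U" and y: "y \<in> b" and D': "D' \<in> sets M \<and> D' \<subseteq> (\<Union>n. D n) \<and> eqon D' u y"
    have uE: "u \<in> E" using u UB Bs_sub SE by blast
    have yE: "y \<in> E" using y bB sc_stable[OF Bc] stable_sub by blast
    have "\<And>n. D' \<inter> seqpart D (Suc n) \<in> null_sets M"
    proof -
      fix n
      obtain u' where u': "u' \<in> Us (Suc n)" "eqon (seqpart D (Suc n)) u u'" using u unfolding U_def conc_sets_char[OF P UsE] by blast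
      obtain y' where y': "y' \<in> bs (Suc n)" "eqon (seqpart D (Suc n)) y y'" using y unfolding b_def conc_sets_char[OF P bsE] by blast
      have u'E: "u' \<in> E" using u'(1) UsE by blast
      have y'E: "y' \<in> E" using y'(1) bsE by blast
      have sD: "D' \<inter> seqpart D (Suc n) \<in> sets M" using D' Ps by blast
      have e1: "eqon (D' \<inter> seqpart D (Suc n)) u u'" by (rule eqon_sub[OF u'(2) _ Ps sD uE u'E]) blast
      have e2: "eqon (D' \<inter> seqpart D (Suc n)) y y'" by (rule eqon_sub[OF y'(2) _ Ps sD yE y'E]) blast
      have e3: "eqon (D' \<inter> seqpart D (Suc n)) u y" by (rule eqon_sub[OF conjunct2[OF conjunct2[OF D']] _ _ sD uE yE]) (use D' in blast)+
      have "eqon (D' \<inter> seqpart D (Suc n)) u' y'" using e1 e2 e3 unfolding eqon_def by simp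
      moreover have "perp (D n) u'' y''" if "u'' = Us (Suc n)" "y'' = bs (Suc n)" for u'' y''
        using f[of n] that unfolding Us_def bs_def by simp
      ultimately show "D' \<inter> seqpart D (Suc n) \<in> null_sets M"
        using u'(1) y'(1) sD seqpart_sub[of D n] unfolding perp_def by blast
    qed
    then have "(\<Union>n. D' \<inter> seqpart D (Suc n)) \<in> null_sets M" by (rule null_sets_UN)
    moreover have "(\<Union>n. D' \<inter> seqpart D (Suc n)) = D'" using D' seqpart_UN[of D] by blast
    ultimately show "D' \<in> null_sets M" by simp
  qed
  then show ?thesis using UB xU bB by blast
qed


lemma iii_imp_i:
  assumes iii: "\<forall>\<O>. stable_coll M E smul \<O> \<and> (\<forall>V\<in>\<O>. openin T V) \<and> S = \<Union>\<O> \<longrightarrow>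
               (\<exists>\<O>'. stable_finite_sub M E smul \<O> \<O>' \<and> S = \<Union>\<O>')"
  shows "stable_compact M E smul T S"
  unfolding stable_compact_def
proof (intro allI impI)
  fix \<F> assume sF: "stable_filter M E smul S \<F>"
  have F: "filter_on S \<F>" using sf_filter[OF sF] .
  obtain \<B> where Bc: "stable_coll M E smul \<B>" and fb: "filter_base \<F> \<B>" using sF unfolding stable_filter_def by blast
  have BF: "\<B> \<subseteq> \<F>" using fb unfolding filter_base_def by blast
  have Bst: "\<And>b. b \<in> \<B> \<Longrightarrow> stable_set M E smul b" using sc_stable[OF Bc] .
  have bE: "\<And>b. b \<in> \<B> \<Longrightarrow> b \<subseteq> E" using Bst stable_sub by blast
  obtain s0 where s0: "s0 \<in> S" using stable_ne[OF Sst] by blast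
  obtain b0 where b0: "b0 \<in> \<B>" using sc_ne[OF Bc] by blast
  show "\<exists>x\<in>S. cluster_point T \<F> x"
  proof (rule ccontr)
    assume nc: "\<not> (\<exists>x\<in>S. cluster_point T \<F> x)"
    define \<G> where "\<G> = {D \<in> sets M. \<exists>x\<in>S. clon \<B> x D}"
    have clon0: "clon \<B> x {}" if x: "x \<in> S" for x
      unfolding clon_def
    proof (intro ballI impI)
      fix U b assume U: "U \<in> Bs" "x \<in> U" and b: "b \<in> \<B>"
      obtain y where y: "y \<in> b" using stable_ne[OF Bst[OF b]] by blast
      have "eqon {} x y" using eqon_empty x SE y bE[OF b] by blast
      then show "\<exists>u\<in>U. \<exists>y\<in>b. eqon {} u y" using U(2) y by blast
    qed
    have "\<exists>H\<in>\<G>. \<forall>D\<in>\<G>. D - H \<in> null_sets M"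
    proof (rule exhaust)
      show "\<G> \<subseteq> sets M" unfolding \<G>_def by blast
      show "\<G> \<noteq> {}" unfolding \<G>_def using clon0[OF s0] s0 by blast
      fix D :: "nat \<Rightarrow> 'w set" assume D: "\<And>n. D n \<in> \<G>"
      have "\<forall>n. \<exists>x. x \<in> S \<and> clon \<B> x (D n)" using D unfolding \<G>_def by blast
      then obtain x where x: "\<And>n. x n \<in> S" "\<And>n. clon \<B> (x n) (D n)" by metis
      have Ds: "\<And>n. D n \<in> sets M" using D unfolding \<G>_def by blast
      have "\<exists>z\<in>S. clon \<B> z (\<Union>n. D n)" by (rule clon_UN[OF Bc Ds x(1) x(2)])
      then show "(\<Union>n. D n) \<in> \<G>" unfolding \<G>_def using Ds by blast
    qed
    then obtain H where H: "H \<in> \<G>" "\<And>D. D \<in> \<G> \<Longrightarrow> D - H \<in> null_sets M" by blast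
    obtain xH where xH: "xH \<in> S" "clon \<B> xH H" using H(1) unfolding \<G>_def by blast
    have Hs: "H \<in> sets M" using H(1) unfolding \<G>_def by blast
    define Q where "Q = space M - H"
    have Qs: "Q \<in> sets M" unfolding Q_def using Hs by blast
    have Qn: "Q \<notin> null_sets M"
    proof
      assume Qn: "Q \<in> null_sets M"
      have "cluster_point T \<F> xH" unfolding cluster_point_def
      proof (intro conjI allI impI)
        show "xH \<in> topspace T" using xH top by simp
        fix U X assume h: "openin T U \<and> xH \<in> U \<and> X \<in> \<F>"
        obtain B where B: "B \<in> Bs" "xH \<in> B" "B \<subseteq> U" using open_base h by blast
        obtain b where b: "b \<in> \<B>" "b \<subseteq> X" using fb h unfolding filter_base_def by blast
        obtain u y where uy: "u \<in> B" "y \<in> b" "eqon H u y" using xH(2) B b(1) unfolding clon_def by blast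
        have uE: "u \<in> E" using uy(1) Bs_sub[OF B(1)] SE by blast
        have yE: "y \<in> E" using uy(2) bE[OF b(1)] by blast
        have "u = y" by (rule eq_of_eqon[OF uy(3) Hs]) (use Qn uE yE in \<open>auto simp: Q_def\<close>)
        then show "U \<inter> X \<noteq> {}" using uy B b by blast
      qed
      then show False using nc xH(1) by blast
    qed
    have claim: "\<And>x. x \<in> S \<Longrightarrow> \<exists>U\<in>Bs. x \<in> U \<and> (\<exists>b\<in>\<B>. perp Q U b)"
    proof -
      fix x assume x: "x \<in> S"
      have xE: "x \<in> E" using x SE by blast
      define \<K> where "\<K> = {D \<in> sets M. \<exists>U\<in>Bs. x \<in> U \<and> (\<exists>b\<in>\<B>. perp D U b)}"
      have "\<exists>K\<in>\<K>. \<forall>D\<in>\<K>. D - K \<in> null_sets M"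
      proof (rule exhaust)
        show "\<K> \<subseteq> sets M" unfolding \<K>_def by blast
        show "\<K> \<noteq> {}" unfolding \<K>_def using S_base[OF x] b0 perp_empty by blast
        fix D :: "nat \<Rightarrow> 'w set" assume D: "\<And>n. D n \<in> \<K>"
        have Ds: "\<And>n. D n \<in> sets M" using D unfolding \<K>_def by blast
        have "\<And>n. \<exists>U\<in>Bs. x \<in> U \<and> (\<exists>b\<in>\<B>. perp (D n) U b)" using D unfolding \<K>_def by blast
        then have "\<exists>U\<in>Bs. x \<in> U \<and> (\<exists>b\<in>\<B>. perp (\<Union>n. D n) U b)" by (rule perp_UN[OF Bc Ds])
        then show "(\<Union>n. D n) \<in> \<K>" unfolding \<K>_def using Ds by blast
      qed
      then obtain K where K: "K \<in> \<K>" "\<And>D. D \<in> \<K> \<Longrightarrow> D - K \<in> null_sets M" by blast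
      have Ks: "K \<in> sets M" using K(1) unfolding \<K>_def by blast
      obtain U b where Ub: "U \<in> Bs" "x \<in> U" "b \<in> \<B>" "perp K U b" using K(1) unfolding \<K>_def by blast
      show "\<exists>U\<in>Bs. x \<in> U \<and> (\<exists>b\<in>\<B>. perp Q U b)"
      proof (cases "Q - K \<in> null_sets M")
        case True
        have "perp Q U b" unfolding perp_def
        proof (intro ballI allI impI)
          fix u y D' assume u: "u \<in> U" and y: "y \<in> b" and D': "D' \<in> sets M \<and> D' \<subseteq> Q \<and> eqon D' u y"
          have uE: "u \<in> E" using u Bs_sub[OF Ub(1)] SE by blast
          have yE: "y \<in> E" using y bE[OF Ub(3)] by blast
          have "eqon (D' \<inter> K) u y" by (rule eqon_sub[OF conjunct2[OF conjunct2[OF D']]]) (use D' Ks uE yE in auto)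
          then have n1: "D' \<inter> K \<in> null_sets M" using Ub(4) u y D' Ks unfolding perp_def by blast
          have n2: "D' - K \<in> null_sets M" by (rule null_sets_subset[OF True]) (use D' Ks in auto)
          have "D' = (D' \<inter> K) \<union> (D' - K)" by blast
          then show "D' \<in> null_sets M" using n1 n2 by (metis null_sets.Un)
        qed
        then show ?thesis using Ub by blast
      next
        case False
        define L where "L = Q - K"
        have Ls: "L \<in> sets M" unfolding L_def using Qs Ks by blast
        have Ln: "L \<notin> null_sets M" using False unfolding L_def .
        have "clon \<B> x L" unfolding clon_def
        proof (intro ballI impI)
          fix U' b' assume U': "U' \<in> Bs" "x \<in> U'" and b': "b' \<in> \<B>"
          have U's: "stable_set M E smul U'" using Bs_stable[OF U'(1)] .
          have b's: "stable_set M E smul b'" using Bst[OF b'] .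
          define \<N> where "\<N> = {D \<in> sets M. \<exists>u\<in>U'. \<exists>y\<in>b'. eqon D u y}"
          have "\<exists>N\<in>\<N>. \<forall>D\<in>\<N>. D - N \<in> null_sets M"
          proof (rule exhaust)
            show "\<N> \<subseteq> sets M" unfolding \<N>_def by blast
            have "\<exists>u\<in>U'. \<exists>y\<in>b'. eqon {} u y" using U'(2) stable_ne[OF b's] eqon_empty xE stable_sub[OF b's] by blast
            then show "\<N> \<noteq> {}" unfolding \<N>_def by blast
            fix D :: "nat \<Rightarrow> 'w set" assume D: "\<And>n. D n \<in> \<N>"
            have Ds: "\<And>n. D n \<in> sets M" using D unfolding \<N>_def by blast
            have "\<And>n. \<exists>u\<in>U'. \<exists>y\<in>b'. eqon (D n) u y" using D unfolding \<N>_def by blast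
            then have "\<exists>u\<in>U'. \<exists>y\<in>b'. eqon (\<Union>n. D n) u y" by (rule pair_UN[OF U's b's Ds])
            then show "(\<Union>n. D n) \<in> \<N>" unfolding \<N>_def using Ds by blast
          qed
          then obtain N where N: "N \<in> \<N>" "\<And>D. D \<in> \<N> \<Longrightarrow> D - N \<in> null_sets M" by blast
          have Ns: "N \<in> sets M" using N(1) unfolding \<N>_def by blast
          obtain u y where uy: "u \<in> U'" "y \<in> b'" "eqon N u y" using N(1) unfolding \<N>_def by blast
          have uE: "u \<in> E" using uy(1) stable_sub[OF U's] by blast
          have yE: "y \<in> E" using uy(2) stable_sub[OF b's] by blast
          show "\<exists>u\<in>U'. \<exists>y\<in>b'. eqon L u y"
          proof (cases "L - N \<in> null_sets M")
            case True
            have "eqon L u y" by (rule eqon_ae[OF uy(3) Ns Ls True uE yE])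
            then show ?thesis using uy by blast
          next
            case False2: False
            define Z where "Z = L - N"
            have Zs: "Z \<in> sets M" unfolding Z_def using Ls Ns by blast
            have "perp Z U' b'" unfolding perp_def
            proof (intro ballI allI impI)
              fix u' y' D' assume u': "u' \<in> U'" and y': "y' \<in> b'" and D': "D' \<in> sets M \<and> D' \<subseteq> Z \<and> eqon D' u' y'"
              have "D' \<in> \<N>" unfolding \<N>_def using u' y' D' by blast
              then have "D' - N \<in> null_sets M" by (rule N(2))
              moreover have "D' - N = D'" using D' unfolding Z_def by blast
              ultimately show "D' \<in> null_sets M" by simp
            qed
            then have "Z \<in> \<K>" unfolding \<K>_def using Zs U' b' by blast
            then have "Z - K \<in> null_sets M" by (rule K(2))
            moreover have "Z - K = Z" unfolding Z_def L_def by blast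
            ultimately show ?thesis using False2 unfolding Z_def by simp
          qed
        qed
        then have "L \<in> \<G>" unfolding \<G>_def using Ls x by blast
        then have "L - H \<in> null_sets M" by (rule H(2))
        moreover have "L - H = L" unfolding L_def Q_def by blast
        ultimately show ?thesis using Ln by simp
      qed
    qed
    define \<O> where "\<O> = {U \<in> Bs. \<exists>b\<in>\<B>. perp Q U b}"
    have Osc: "stable_coll M E smul \<O>" unfolding stable_coll_def
    proof (intro conjI allI impI ballI)
      show "\<O> \<noteq> {}" unfolding \<O>_def using claim[OF s0] by blast
      fix U assume "U \<in> \<O>" then show "stable_set M E smul U" unfolding \<O>_def using Bs_stable by blast
    next
      fix A :: "nat \<Rightarrow> 'w set" and Y :: "nat \<Rightarrow> 'e set" assume h: "meas_partition M A \<and> (\<forall>k. Y k \<in> \<O>)"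
      then have A: "meas_partition M A" and YO: "\<And>k. Y k \<in> \<O>" by auto
      have "\<forall>k. \<exists>b. b \<in> \<B> \<and> perp Q (Y k) b" using YO unfolding \<O>_def by blast
      then obtain bs where bs: "\<And>k. bs k \<in> \<B>" "\<And>k. perp Q (Y k) (bs k)" by metis
      have YB: "\<And>k. Y k \<in> Bs" using YO unfolding \<O>_def by blast
      have YE: "\<And>k. Y k \<subseteq> E" using YB Bs_sub SE by blast
      have bsE: "\<And>k. bs k \<subseteq> E" using bs(1) bE by blast
      have cB: "conc_sets E smul A Y \<in> Bs" by (rule sc_conc[OF Bs A YB])
      have cb: "conc_sets E smul A bs \<in> \<B>" by (rule sc_conc[OF Bc A bs(1)])
      have Ak: "\<And>k. A k \<in> sets M" using mp_sets[OF A] .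
      have "perp Q (conc_sets E smul A Y) (conc_sets E smul A bs)" unfolding perp_def
      proof (intro ballI allI impI)
        fix u y D' assume u: "u \<in> conc_sets E smul A Y" and y: "y \<in> conc_sets E smul A bs"
          and D': "D' \<in> sets M \<and> D' \<subseteq> Q \<and> eqon D' u y"
        have uE: "u \<in> E" using u conc_sets_subE[of A Y, OF A YE] by blast
        have yE: "y \<in> E" using y conc_sets_subE[of A bs, OF A bsE] by blast
        have "\<And>k. D' \<inter> A k \<in> null_sets M"
        proof -
          fix k
          obtain u' where u': "u' \<in> Y k" "eqon (A k) u u'" using u unfolding conc_sets_char[OF A YE] by blast
          obtain y' where y': "y' \<in> bs k" "eqon (A k) y y'" using y unfolding conc_sets_char[OF A bsE] by blast
          have u'E: "u' \<in> E" using u'(1) YE by blast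
          have y'E: "y' \<in> E" using y'(1) bsE by blast
          have sD: "D' \<inter> A k \<in> sets M" using D' Ak by blast
          have e1: "eqon (D' \<inter> A k) u u'" by (rule eqon_sub[OF u'(2) _ Ak sD uE u'E]) blast
          have e2: "eqon (D' \<inter> A k) y y'" by (rule eqon_sub[OF y'(2) _ Ak sD yE y'E]) blast
          have e3: "eqon (D' \<inter> A k) u y" by (rule eqon_sub[OF conjunct2[OF conjunct2[OF D']] _ _ sD uE yE]) (use D' in blast)+
          have "eqon (D' \<inter> A k) u' y'" using e1 e2 e3 unfolding eqon_def by simp
          then show "D' \<inter> A k \<in> null_sets M" using bs(2)[of k] u'(1) y'(1) sD D' unfolding perp_def by blast
        qed
        then show "D' \<in> null_sets M" using null_partition[OF A] D' by blast
      qed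
      then show "conc_sets E smul A Y \<in> \<O>" unfolding \<O>_def using cB cb by blast
    qed
    have Oop: "\<forall>V\<in>\<O>. openin T V" unfolding \<O>_def using Bo by blast
    have Ocov: "S = \<Union>\<O>"
    proof
      show "S \<subseteq> \<Union>\<O>" using claim unfolding \<O>_def by blast
      show "\<Union>\<O> \<subseteq> S" unfolding \<O>_def using Bs_sub by blast
    qed
    obtain \<O>' where O': "stable_finite_sub M E smul \<O> \<O>'" "S = \<Union>\<O>'" using iii Osc Oop Ocov by blast
    obtain A Os where d: "okdat \<O> A Os" and O'eq: "\<O>' = Odat A Os" using sfs_Odat[OF O'(1)] by blast
    have A: "meas_partition M A" using d unfolding okdat_def by blast
    have Ak: "\<And>k. A k \<in> sets M" using mp_sets[OF A] .
    have "\<forall>U\<in>\<O>. \<exists>b. b \<in> \<B> \<and> perp Q U b" unfolding \<O>_def by blast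
    then obtain g where g: "\<And>U. U \<in> \<O> \<Longrightarrow> g U \<in> \<B> \<and> perp Q U (g U)" by metis
    have "\<forall>k. \<exists>b'. b' \<in> \<B> \<and> (\<forall>U\<in>Os k. b' \<subseteq> g U)"
    proof
      fix k
      have Osk: "finite (Os k)" "Os k \<noteq> {}" "Os k \<subseteq> \<O>" using d unfolding okdat_def by auto
      have "\<Inter>(g ` Os k) \<in> \<F>" by (rule filter_finite_inter[OF F]) (use Osk g BF in auto)
      then obtain b' where "b' \<in> \<B>" "b' \<subseteq> \<Inter>(g ` Os k)" using fb unfolding filter_base_def by blast
      then show "\<exists>b'. b' \<in> \<B> \<and> (\<forall>U\<in>Os k. b' \<subseteq> g U)" by blast
    qed
    then obtain b' where b': "\<And>k. b' k \<in> \<B>" "\<And>k U. U \<in> Os k \<Longrightarrow> b' k \<subseteq> g U" by metis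
    have b'E: "\<And>k. b' k \<subseteq> E" using b'(1) bE by blast
    have cb: "conc_sets E smul A b' \<in> \<B>" by (rule sc_conc[OF Bc A b'(1)])
    obtain y where y: "y \<in> conc_sets E smul A b'" using stable_ne[OF Bst[OF cb]] by blast
    have yE: "y \<in> E" using y bE[OF cb] by blast
    have yS: "y \<in> S" using y cb BF filter_sub[OF F] by blast
    obtain W where W: "W \<in> Odat A Os" "y \<in> W" using yS O'(2) O'eq by blast
    obtain V where V: "W = conc_sets E smul A V" "\<And>k. V k \<in> st M E smul (Os k)" using Odat_elem[OF W(1)] by blast
    have VE: "\<And>k. V k \<subseteq> E" using okdat_st_stable[OF Osc d V(2)] stable_sub by blast
    have "\<not> (\<forall>k. Q \<inter> A k \<in> null_sets M)" using null_partition[OF A Qs] Qn by blast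
    then obtain k where k: "Q \<inter> A k \<notin> null_sets M" by blast
    obtain v where v: "v \<in> V k" "eqon (A k) y v" using W(2) unfolding V(1) conc_sets_char[OF A VE] by blast
    obtain y' where y': "y' \<in> b' k" "eqon (A k) y y'" using y unfolding conc_sets_char[OF A b'E] by blast
    obtain B' Us where BU: "V k = conc_sets E smul B' Us" "meas_partition M B'" "\<And>j. Us j \<in> Os k"
      using V(2)[of k] unfolding st_def by blast
    have Osk: "Os k \<subseteq> \<O>" using d unfolding okdat_def by blast
    have UsE: "\<And>j. Us j \<subseteq> E" using BU(3) Osk Bs_sub SE unfolding \<O>_def by blast
    have QAs: "Q \<inter> A k \<in> sets M" using Qs Ak by blast
    have "\<not> (\<forall>j. Q \<inter> A k \<inter> B' j \<in> null_sets M)" using null_partition[OF BU(2) QAs] k by blast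
    then obtain j where j: "Q \<inter> A k \<inter> B' j \<notin> null_sets M" by blast
    obtain u where u: "u \<in> Us j" "eqon (B' j) v u" using v(1) unfolding BU(1) conc_sets_char[OF BU(2) UsE] by blast
    define D where "D = Q \<inter> A k \<inter> B' j"
    have Ds: "D \<in> sets M" unfolding D_def using QAs mp_sets[OF BU(2)] by blast
    have vE: "v \<in> E" using v(1) VE by blast
    have uE: "u \<in> E" using u(1) UsE by blast
    have y'E: "y' \<in> E" using y'(1) b'E by blast
    have e1: "eqon D y v" by (rule eqon_sub[OF v(2) _ Ak Ds yE vE]) (auto simp: D_def)
    have e2: "eqon D y y'" by (rule eqon_sub[OF y'(2) _ Ak Ds yE y'E]) (auto simp: D_def)
    have e3: "eqon D v u" by (rule eqon_sub[OF u(2) _ mp_sets[OF BU(2)] Ds vE uE]) (auto simp: D_def)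
    have eu: "eqon D u y'" using e1 e2 e3 unfolding eqon_def by simp
    have UjO: "Us j \<in> \<O>" using BU(3) Osk by blast
    have "y' \<in> g (Us j)" using b'(2)[OF BU(3)] y'(1) by blast
    note yg = this
    have pg: "perp Q (Us j) (g (Us j))" using g[OF UjO] by blast
    have DQ: "D \<subseteq> Q" unfolding D_def by blast
    have "D \<in> null_sets M" using pg u(1) yg eu Ds DQ unfolding perp_def by blast
    then show False using j unfolding D_def by simp
  qed
qed

end

context stabtop begin

definition nowhere :: "'e set set \<Rightarrow> 'e \<Rightarrow> 'w set \<Rightarrow> bool" where
  "nowhere \<W> x D \<longleftrightarrow> (\<forall>W\<in>\<W>. \<forall>w\<in>W. \<forall>D'. D' \<in> sets M \<and> D' \<subseteq> D \<and> eqon D' x w \<longrightarrow> D' \<in> null_sets M)"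

lemma nowhere_UN: fixes D :: "nat \<Rightarrow> 'w set"
  assumes WE: "\<And>W. W \<in> \<W> \<Longrightarrow> W \<subseteq> E" and D: "\<And>n. D n \<in> sets M" and x: "\<And>n. x n \<in> S"
    and nw: "\<And>n. nowhere \<W> (x n) (D n)"
  shows "\<exists>z\<in>S. nowhere \<W> z (\<Union>n. D n)"
proof -
  define xs where "xs = (\<lambda>m. if m = 0 then x 0 else x (m - 1))"
  have xsS: "\<And>m. xs m \<in> S" using x unfolding xs_def by simp
  have xsE: "\<And>m. xs m \<in> E" using xsS SE by blast
  have P: "meas_partition M (seqpart D)" by (rule seqpart_mp[OF D])
  have Ps: "\<And>m. seqpart D m \<in> sets M" using mp_sets[OF P] .
  define z where "z = conc E smul (seqpart D) xs"
  have zS: "z \<in> S" unfolding z_def by (rule stable_conc[OF Sst P xsS])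
  have zE: "z \<in> E" using zS SE by blast
  have zx: "eqon (seqpart D (Suc n)) z (x n)" for n
  proof -
    have "eqon (seqpart D (Suc n)) z (xs (Suc n))" using conc(2)[of "seqpart D" xs, OF P xsE] unfolding z_def by blast
    then show ?thesis unfolding xs_def by simp
  qed
  have "nowhere \<W> z (\<Union>n. D n)" unfolding nowhere_def
  proof (intro ballI allI impI)
    fix W w D' assume W: "W \<in> \<W>" and w: "w \<in> W" and D': "D' \<in> sets M \<and> D' \<subseteq> (\<Union>n. D n) \<and> eqon D' z w"
    have wE: "w \<in> E" using w WE[OF W] by blast
    have "\<And>n. D' \<inter> seqpart D (Suc n) \<in> null_sets M"
    proof -
      fix n
      have sD: "D' \<inter> seqpart D (Suc n) \<in> sets M" using D' Ps by blast
      have xnE: "x n \<in> E" using x SE by blast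
      have e1: "eqon (D' \<inter> seqpart D (Suc n)) z (x n)" by (rule eqon_sub[OF zx _ Ps sD zE xnE]) blast
      have e2: "eqon (D' \<inter> seqpart D (Suc n)) z w" by (rule eqon_sub[OF conjunct2[OF conjunct2[OF D']] _ _ sD zE wE]) (use D' in blast)+
      have "eqon (D' \<inter> seqpart D (Suc n)) (x n) w" using e1 e2 unfolding eqon_def by simp
      moreover have "D' \<inter> seqpart D (Suc n) \<subseteq> D n" using seqpart_sub[of D n] by blast
      ultimately show "D' \<inter> seqpart D (Suc n) \<in> null_sets M" using nw[of n] W w sD unfolding nowhere_def by blast
    qed
    then have "(\<Union>n. D' \<inter> seqpart D (Suc n)) \<in> null_sets M" by (rule null_sets_UN)
    moreover have "(\<Union>n. D' \<inter> seqpart D (Suc n)) = D'" using D' seqpart_UN[of D] by blast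
    ultimately show "D' \<in> null_sets M" by simp
  qed
  then show ?thesis using zS by blast
qed

lemma inloc_Odat_UN: fixes D :: "nat \<Rightarrow> 'w set"
  assumes O: "stable_coll M E smul \<O>" and d: "okdat \<O> A Os" and D: "\<And>n. D n \<in> sets M" and x: "x \<in> E"
    and h: "\<And>n. \<exists>W\<in>Odat A Os. inloc (D n) x W"
  shows "\<exists>W\<in>Odat A Os. inloc (\<Union>n. D n) x W"
proof -
  have "\<forall>n. \<exists>p. fst p \<in> Odat A Os \<and> snd p \<in> fst p \<and> eqon (D n) x (snd p)" using h unfolding inloc_def by fastforce
  then obtain f where f: "\<And>n. fst (f n) \<in> Odat A Os \<and> snd (f n) \<in> fst (f n) \<and> eqon (D n) x (snd (f n))" by metis
  define Ws where "Ws = (\<lambda>m. fst (f (m - 1)))"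
  define ws where "ws = (\<lambda>m. snd (f (m - 1)))"
  have Ws: "\<And>m. Ws m \<in> Odat A Os" using f unfolding Ws_def by blast
  have ws: "\<And>m. ws m \<in> Ws m" using f unfolding Ws_def ws_def by blast
  have WsE: "\<And>m. Ws m \<subseteq> E" using Odat_stable[OF O d Ws] stable_sub by blast
  have wsE: "\<And>m. ws m \<in> E" using ws WsE by blast
  have P: "meas_partition M (seqpart D)" by (rule seqpart_mp[OF D])
  have Ps: "\<And>m. seqpart D m \<in> sets M" using mp_sets[OF P] .
  define W where "W = conc_sets E smul (seqpart D) Ws"
  define w where "w = conc E smul (seqpart D) ws"
  have WO: "W \<in> Odat A Os" unfolding W_def by (rule Odat_glue[OF O d P Ws])
  have wW: "w \<in> W" unfolding W_def w_def conc_sets_def using ws by blast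
  have wE: "w \<in> E" unfolding w_def by (rule conc(1)[OF P wsE])
  have e: "\<And>n. eqon (seqpart D (Suc n)) x w"
  proof -
    fix n
    have 1: "eqon (seqpart D (Suc n)) w (ws (Suc n))" using conc(2)[of "seqpart D" ws, OF P wsE] unfolding w_def by blast
    have 2: "eqon (D n) x (ws (Suc n))" using f[of n] unfolding ws_def by simp
    have 3: "eqon (seqpart D (Suc n)) x (ws (Suc n))" by (rule eqon_sub[OF 2 seqpart_sub D Ps x wsE])
    show "eqon (seqpart D (Suc n)) x w" using 1 3 unfolding eqon_def by simp
  qed
  have "eqon (\<Union>n. seqpart D (Suc n)) x w" by (rule eqon_UN[of "\<lambda>n. seqpart D (Suc n)", OF Ps x wE e])
  then show ?thesis unfolding seqpart_UN inloc_def using WO wW by blast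
qed


lemma nowhere_anti: "\<W> \<subseteq> \<W>' \<Longrightarrow> nowhere \<W>' x D \<Longrightarrow> nowhere \<W> x D"
  unfolding nowhere_def by blast

lemma i_imp_iii:
  assumes i: "stable_compact M E smul T S"
    and Osc: "stable_coll M E smul \<O>" and Oop: "\<forall>V\<in>\<O>. openin T V" and Ocov: "S = \<Union>\<O>"
  shows "\<exists>\<O>'. stable_finite_sub M E smul \<O> \<O>' \<and> S = \<Union>\<O>'"
proof (rule ccontr)
  assume nex: "\<not> (\<exists>\<O>'. stable_finite_sub M E smul \<O> \<O>' \<and> S = \<Union>\<O>')"
  have OS: "\<And>V. V \<in> \<O> \<Longrightarrow> V \<subseteq> S" using Oop openin_subset top by blast
  obtain s0 where s0: "s0 \<in> S" using stable_ne[OF Sst] by blast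
  obtain O0 where O0: "O0 \<in> \<O>" using sc_ne[OF Osc] by blast
  have d0: "okdat \<O> triv (\<lambda>_. {O0})" by (rule okdat_triv[OF O0])
  have OdE: "\<And>A Os W. okdat \<O> A Os \<Longrightarrow> W \<in> Odat A Os \<Longrightarrow> W \<subseteq> E"
    using Odat_stable[OF Osc] stable_sub by blast
  define cov where "cov D \<longleftrightarrow> (\<exists>A Os. okdat \<O> A Os \<and> (\<forall>x\<in>S. \<exists>W\<in>Odat A Os. inloc D x W))" for D
  define \<C> where "\<C> = {D \<in> sets M. cov D}"
  have "\<exists>H\<in>\<C>. \<forall>D\<in>\<C>. D - H \<in> null_sets M"
  proof (rule exhaust)
    show "\<C> \<subseteq> sets M" unfolding \<C>_def by blast
    have "\<forall>x\<in>S. \<exists>W\<in>Odat triv (\<lambda>_. {O0}). inloc {} x W"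
    proof
      fix x assume x: "x \<in> S"
      obtain W where W: "W \<in> Odat triv (\<lambda>_. {O0})" using Odat_ne[OF Osc d0] by blast
      obtain w where w: "w \<in> W" using stable_ne[OF Odat_stable[OF Osc d0 W]] by blast
      have "eqon {} x w" using eqon_empty x SE w OdE[OF d0 W] by blast
      then show "\<exists>W\<in>Odat triv (\<lambda>_. {O0}). inloc {} x W" unfolding inloc_def using W w by blast
    qed
    then have "cov {}" unfolding cov_def using d0 by blast
    then show "\<C> \<noteq> {}" unfolding \<C>_def by blast
    fix D :: "nat \<Rightarrow> 'w set" assume D: "\<And>n. D n \<in> \<C>"
    have Ds: "\<And>n. D n \<in> sets M" using D unfolding \<C>_def by blast
    have "\<forall>n. \<exists>p. okdat \<O> (fst p) (snd p) \<and> (\<forall>x\<in>S. \<exists>W\<in>Odat (fst p) (snd p). inloc (D n) x W)"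
      using D unfolding \<C>_def cov_def by fastforce
    then obtain f where f: "\<And>n. okdat \<O> (fst (f n)) (snd (f n)) \<and> (\<forall>x\<in>S. \<exists>W\<in>Odat (fst (f n)) (snd (f n)). inloc (D n) x W)"
      by metis
    define As where "As = (\<lambda>m. fst (f (m - 1)))"
    define Oss where "Oss = (\<lambda>m. snd (f (m - 1)))"
    have dm: "\<And>m. okdat \<O> (As m) (Oss m)" using f unfolding As_def Oss_def by blast
    have P: "meas_partition M (seqpart D)" by (rule seqpart_mp[OF Ds])
    have Ps: "\<And>m. seqpart D m \<in> sets M" using mp_sets[OF P] .
    note cmb = Odat_combine[OF Osc P dm]
    have "\<forall>x\<in>S. \<exists>W\<in>Odat (refpart (seqpart D) As) (\<lambda>m. Oss (fst (prod_decode m)) (snd (prod_decode m))). inloc (\<Union>n. D n) x W"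
    proof
      fix x assume x: "x \<in> S"
      have xE: "x \<in> E" using x SE by blast
      have "\<forall>m. \<exists>p. fst p \<in> Odat (As m) (Oss m) \<and> snd p \<in> fst p \<and> eqon (D (m - 1)) x (snd p)"
      proof
        fix m
        obtain W where W: "W \<in> Odat (As m) (Oss m)" "inloc (D (m - 1)) x W" using f[of "m - 1"] x unfolding As_def Oss_def by blast
        then obtain w where "w \<in> W" "eqon (D (m - 1)) x w" unfolding inloc_def by blast
        then show "\<exists>p. fst p \<in> Odat (As m) (Oss m) \<and> snd p \<in> fst p \<and> eqon (D (m - 1)) x (snd p)"
          using W(1) by (intro exI[of _ "(W, w)"]) simp
      qed
      then obtain g where g: "\<And>m. fst (g m) \<in> Odat (As m) (Oss m) \<and> snd (g m) \<in> fst (g m) \<and> eqon (D (m - 1)) x (snd (g m))"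
        by metis
      define Ws where "Ws = (\<lambda>m. fst (g m))"
      define ws where "ws = (\<lambda>m. snd (g m))"
      have Ws: "\<And>m. Ws m \<in> Odat (As m) (Oss m)" using g unfolding Ws_def by blast
      have ws: "\<And>m. ws m \<in> Ws m" using g unfolding Ws_def ws_def by blast
      have wsE: "\<And>m. ws m \<in> E" using ws OdE[OF dm Ws] by blast
      define W where "W = conc_sets E smul (seqpart D) Ws"
      define w where "w = conc E smul (seqpart D) ws"
      have WO: "W \<in> Odat (refpart (seqpart D) As) (\<lambda>m. Oss (fst (prod_decode m)) (snd (prod_decode m)))"
        unfolding W_def by (rule cmb(2)[OF Ws])
      have wW: "w \<in> W" unfolding W_def w_def conc_sets_def using ws by blast
      have wE: "w \<in> E" unfolding w_def by (rule conc(1)[OF P wsE])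
      have e: "\<And>n. eqon (seqpart D (Suc n)) x w"
      proof -
        fix n
        have 1: "eqon (seqpart D (Suc n)) w (ws (Suc n))" using conc(2)[of "seqpart D" ws, OF P wsE] unfolding w_def by blast
        have 2: "eqon (D n) x (ws (Suc n))" using g[of "Suc n"] unfolding ws_def by simp
        have 3: "eqon (seqpart D (Suc n)) x (ws (Suc n))" by (rule eqon_sub[OF 2 seqpart_sub Ds Ps xE wsE])
        show "eqon (seqpart D (Suc n)) x w" using 1 3 unfolding eqon_def by simp
      qed
      have "eqon (\<Union>n. seqpart D (Suc n)) x w" by (rule eqon_UN[of "\<lambda>n. seqpart D (Suc n)", OF Ps xE wE e])
      then show "\<exists>W\<in>Odat (refpart (seqpart D) As) (\<lambda>m. Oss (fst (prod_decode m)) (snd (prod_decode m))). inloc (\<Union>n. D n) x W"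
        unfolding seqpart_UN inloc_def using WO wW by blast
    qed
    then have "cov (\<Union>n. D n)" unfolding cov_def
      by (intro exI[of _ "refpart (seqpart D) As"] exI[of _ "\<lambda>m. Oss (fst (prod_decode m)) (snd (prod_decode m))"] conjI cmb(1))
    then show "(\<Union>n. D n) \<in> \<C>" unfolding \<C>_def using Ds by blast
  qed
  then obtain H where H: "H \<in> \<C>" "\<And>D. D \<in> \<C> \<Longrightarrow> D - H \<in> null_sets M" by blast
  have Hs: "H \<in> sets M" using H(1) unfolding \<C>_def by blast
  define Q where "Q = space M - H"
  have Qs: "Q \<in> sets M" unfolding Q_def using Hs by blast
  have Qn: "Q \<notin> null_sets M"
  proof
    assume Qn: "Q \<in> null_sets M"
    obtain A Os where d: "okdat \<O> A Os" and c: "\<forall>x\<in>S. \<exists>W\<in>Odat A Os. inloc H x W"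
      using H(1) unfolding \<C>_def cov_def by blast
    have "S \<subseteq> \<Union>(Odat A Os)"
    proof
      fix x assume x: "x \<in> S"
      obtain W w where W: "W \<in> Odat A Os" "w \<in> W" "eqon H x w" using c x unfolding inloc_def by blast
      have "x = w" by (rule eq_of_eqon[OF W(3) Hs]) (use Qn x SE W(2) OdE[OF d W(1)] in \<open>auto simp: Q_def\<close>)
      then show "x \<in> \<Union>(Odat A Os)" using W by blast
    qed
    moreover have "\<Union>(Odat A Os) \<subseteq> S" using Odat_sub[OF Osc d] OS by blast
    ultimately show False using nex Odat_sfs[OF Osc d] by blast
  qed
  define N where "N A Os = {x\<in>S. nowhere (Odat A Os) x Q}" for A Os
  have Nne: "\<And>A Os. okdat \<O> A Os \<Longrightarrow> N A Os \<noteq> {}"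
  proof -
    fix A Os assume d: "okdat \<O> A Os"
    define \<N> where "\<N> = {D \<in> sets M. D \<subseteq> Q \<and> (\<exists>x\<in>S. nowhere (Odat A Os) x D)}"
    have "\<exists>K\<in>\<N>. \<forall>D\<in>\<N>. D - K \<in> null_sets M"
    proof (rule exhaust)
      show "\<N> \<subseteq> sets M" unfolding \<N>_def by blast
      have "nowhere (Odat A Os) s0 {}" unfolding nowhere_def by auto
      then show "\<N> \<noteq> {}" unfolding \<N>_def using s0 by blast
      fix D :: "nat \<Rightarrow> 'w set" assume D: "\<And>n. D n \<in> \<N>"
      have Ds: "\<And>n. D n \<in> sets M" using D unfolding \<N>_def by blast
      have "\<forall>n. \<exists>x. x \<in> S \<and> nowhere (Odat A Os) x (D n)" using D unfolding \<N>_def by blast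
      then obtain x where x: "\<And>n. x n \<in> S" "\<And>n. nowhere (Odat A Os) (x n) (D n)" by metis
      have "\<exists>z\<in>S. nowhere (Odat A Os) z (\<Union>n. D n)" by (rule nowhere_UN[OF OdE[OF d] Ds x(1) x(2)])
      moreover have "(\<Union>n. D n) \<subseteq> Q" using D unfolding \<N>_def by blast
      ultimately show "(\<Union>n. D n) \<in> \<N>" unfolding \<N>_def using Ds by blast
    qed
    then obtain K where K: "K \<in> \<N>" "\<And>D. D \<in> \<N> \<Longrightarrow> D - K \<in> null_sets M" by blast
    have Ks: "K \<in> sets M" and KQ: "K \<subseteq> Q" using K(1) unfolding \<N>_def by auto
    obtain xK where xK: "xK \<in> S" "nowhere (Odat A Os) xK K" using K(1) unfolding \<N>_def by blast
    show "N A Os \<noteq> {}"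
    proof (cases "Q - K \<in> null_sets M")
      case True
      have "nowhere (Odat A Os) xK Q" unfolding nowhere_def
      proof (intro ballI allI impI)
        fix W w D' assume W: "W \<in> Odat A Os" and w: "w \<in> W" and D': "D' \<in> sets M \<and> D' \<subseteq> Q \<and> eqon D' xK w"
        have xE: "xK \<in> E" using xK SE by blast
        have wE: "w \<in> E" using w OdE[OF d W] by blast
        have "eqon (D' \<inter> K) xK w" by (rule eqon_sub[OF conjunct2[OF conjunct2[OF D']]]) (use D' Ks xE wE in auto)
        then have n1: "D' \<inter> K \<in> null_sets M" using xK(2) W w D' Ks unfolding nowhere_def by blast
        have n2: "D' - K \<in> null_sets M" by (rule null_sets_subset[OF True]) (use D' Ks in auto)
        have "D' = (D' \<inter> K) \<union> (D' - K)" by blast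
        then show "D' \<in> null_sets M" using n1 n2 by (metis null_sets.Un)
      qed
      then show ?thesis unfolding N_def using xK(1) by blast
    next
      case False
      define L where "L = Q - K"
      have Ls: "L \<in> sets M" unfolding L_def using Qs Ks by blast
      have "\<forall>x\<in>S. \<exists>W\<in>Odat A Os. inloc L x W"
      proof
        fix x assume x: "x \<in> S"
        have xE: "x \<in> E" using x SE by blast
        define \<Y> where "\<Y> = {D \<in> sets M. \<exists>W\<in>Odat A Os. inloc D x W}"
        have "\<exists>Y\<in>\<Y>. \<forall>D\<in>\<Y>. D - Y \<in> null_sets M"
        proof (rule exhaust)
          show "\<Y> \<subseteq> sets M" unfolding \<Y>_def by blast
          obtain W where W: "W \<in> Odat A Os" using Odat_ne[OF Osc d] by blast
          obtain w where w: "w \<in> W" using stable_ne[OF Odat_stable[OF Osc d W]] by blast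
          have "eqon {} x w" using eqon_empty xE w OdE[OF d W] by blast
          then show "\<Y> \<noteq> {}" unfolding \<Y>_def inloc_def using W w by blast
          fix D :: "nat \<Rightarrow> 'w set" assume D: "\<And>n. D n \<in> \<Y>"
          have Ds: "\<And>n. D n \<in> sets M" using D unfolding \<Y>_def by blast
          have "\<And>n. \<exists>W\<in>Odat A Os. inloc (D n) x W" using D unfolding \<Y>_def by blast
          then have "\<exists>W\<in>Odat A Os. inloc (\<Union>n. D n) x W" by (rule inloc_Odat_UN[OF Osc d Ds xE])
          then show "(\<Union>n. D n) \<in> \<Y>" unfolding \<Y>_def using Ds by blast
        qed
        then obtain Y where Y: "Y \<in> \<Y>" "\<And>D. D \<in> \<Y> \<Longrightarrow> D - Y \<in> null_sets M" by blast
        have Ys: "Y \<in> sets M" using Y(1) unfolding \<Y>_def by blast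
        obtain W w where W: "W \<in> Odat A Os" "w \<in> W" "eqon Y x w" using Y(1) unfolding \<Y>_def inloc_def by blast
        have wE: "w \<in> E" using W(2) OdE[OF d W(1)] by blast
        show "\<exists>W\<in>Odat A Os. inloc L x W"
        proof (cases "L - Y \<in> null_sets M")
          case True
          have "eqon L x w" by (rule eqon_ae[OF W(3) Ys Ls True xE wE])
          then show ?thesis unfolding inloc_def using W by blast
        next
          case False2: False
          define Z where "Z = L - Y"
          have Zs: "Z \<in> sets M" unfolding Z_def using Ls Ys by blast
          have "nowhere (Odat A Os) x Z" unfolding nowhere_def
          proof (intro ballI allI impI)
            fix W' w' D' assume W': "W' \<in> Odat A Os" and w': "w' \<in> W'" and D': "D' \<in> sets M \<and> D' \<subseteq> Z \<and> eqon D' x w'"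
            have "D' \<in> \<Y>" unfolding \<Y>_def inloc_def using W' w' D' by blast
            then have "D' - Y \<in> null_sets M" by (rule Y(2))
            moreover have "D' - Y = D'" using D' unfolding Z_def by blast
            ultimately show "D' \<in> null_sets M" by simp
          qed
          moreover have "Z \<subseteq> Q" unfolding Z_def L_def by blast
          ultimately have "Z \<in> \<N>" unfolding \<N>_def using Zs x by blast
          then have "Z - K \<in> null_sets M" by (rule K(2))
          moreover have "Z - K = Z" unfolding Z_def L_def by blast
          ultimately show ?thesis using False2 unfolding Z_def by simp
        qed
      qed
      then have "cov L" unfolding cov_def using d by blast
      then have "L \<in> \<C>" unfolding \<C>_def using Ls by blast
      then have "L - H \<in> null_sets M" by (rule H(2))
      moreover have "L - H = L" unfolding L_def Q_def by blast
      ultimately show ?thesis using False unfolding L_def by simp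
    qed
  qed
  have NS: "\<And>A Os. N A Os \<subseteq> S" unfolding N_def by blast
  have Nst: "\<And>A Os. okdat \<O> A Os \<Longrightarrow> stable_set M E smul (N A Os)"
  proof -
    fix A Os assume d: "okdat \<O> A Os"
    have "\<And>B xs. meas_partition M B \<and> (\<forall>n. xs n \<in> N A Os) \<longrightarrow> conc E smul B xs \<in> N A Os"
    proof
      fix B :: "nat \<Rightarrow> 'w set" and xs :: "nat \<Rightarrow> 'e" assume h: "meas_partition M B \<and> (\<forall>n. xs n \<in> N A Os)"
      then have B: "meas_partition M B" and xsN: "\<And>n. xs n \<in> N A Os" by auto
      have xsS: "\<And>n. xs n \<in> S" using xsN NS by blast
      have xsE: "\<And>n. xs n \<in> E" using xsS SE by blast
      have Bn: "\<And>n. B n \<in> sets M" using mp_sets[OF B] .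
      define z where "z = conc E smul B xs"
      have zS: "z \<in> S" unfolding z_def by (rule stable_conc[OF Sst B xsS])
      have zE: "z \<in> E" using zS SE by blast
      have "nowhere (Odat A Os) z Q" unfolding nowhere_def
      proof (intro ballI allI impI)
        fix W w D' assume W: "W \<in> Odat A Os" and w: "w \<in> W" and D': "D' \<in> sets M \<and> D' \<subseteq> Q \<and> eqon D' z w"
        have wE: "w \<in> E" using w OdE[OF d W] by blast
        have "\<And>n. D' \<inter> B n \<in> null_sets M"
        proof -
          fix n
          have sD: "D' \<inter> B n \<in> sets M" using D' Bn by blast
          have e1: "eqon (D' \<inter> B n) z (xs n)"
            by (rule eqon_sub[of "B n"]) (use conc(2)[of B xs, OF B xsE] z_def Bn sD zE xsE in auto)
          have e2: "eqon (D' \<inter> B n) z w" by (rule eqon_sub[OF conjunct2[OF conjunct2[OF D']] _ _ sD zE wE]) (use D' in blast)+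
          have "eqon (D' \<inter> B n) (xs n) w" using e1 e2 unfolding eqon_def by simp
          moreover have "nowhere (Odat A Os) (xs n) Q" using xsN unfolding N_def by blast
          ultimately show "D' \<inter> B n \<in> null_sets M" using W w sD D' unfolding nowhere_def by blast
        qed
        then show "D' \<in> null_sets M" using null_partition[OF B] D' by blast
      qed
      then show "conc E smul B xs \<in> N A Os" unfolding N_def z_def[symmetric] using zS by blast
    qed
    then show "stable_set M E smul (N A Os)" unfolding stable_set_def using Nne[OF d] NS SE by blast
  qed
  define \<FF> where "\<FF> = {X. X \<subseteq> S \<and> (\<exists>A Os. okdat \<O> A Os \<and> N A Os \<subseteq> X)}"
  define \<BB> where "\<BB> = {X \<in> \<FF>. stable_set M E smul X}"
  have SF: "S \<in> \<FF>" unfolding \<FF>_def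
    by (intro CollectI conjI subset_refl exI[of _ triv] exI[of _ "\<lambda>_. {O0}"] d0 NS)
  have Ffil: "filter_on S \<FF>" unfolding filter_on_def
  proof (intro conjI ballI allI impI)
    show "S \<in> \<FF>" by (rule SF)
    show "{} \<notin> \<FF>" unfolding \<FF>_def using Nne by blast
    fix X assume X: "X \<in> \<FF>"
    then show "X \<subseteq> S" unfolding \<FF>_def by blast
    {
      fix Y assume Y: "Y \<in> \<FF>"
      obtain A1 Os1 where d1: "okdat \<O> A1 Os1" "N A1 Os1 \<subseteq> X" using X unfolding \<FF>_def by blast
      obtain A2 Os2 where d2: "okdat \<O> A2 Os2" "N A2 Os2 \<subseteq> Y" using Y unfolding \<FF>_def by blast
      note r = Odat_refine[OF Osc d1(1) d2(1)]
      define A3 where "A3 = refpart A1 (\<lambda>_. A2)"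
      define Os3 where "Os3 = (\<lambda>n. Os1 (fst (prod_decode n)) \<union> Os2 (snd (prod_decode n)))"
      have d3: "okdat \<O> A3 Os3" using r(1) unfolding A3_def Os3_def .
      have "N A3 Os3 \<subseteq> N A1 Os1" unfolding N_def using nowhere_anti[OF r(2)] unfolding A3_def Os3_def by blast
      moreover have "N A3 Os3 \<subseteq> N A2 Os2" unfolding N_def using nowhere_anti[OF r(3)] unfolding A3_def Os3_def by blast
      ultimately have "N A3 Os3 \<subseteq> X \<inter> Y" using d1(2) d2(2) by blast
      then show "X \<inter> Y \<in> \<FF>" unfolding \<FF>_def using d3 X unfolding \<FF>_def by blast
    }
    fix G assume "X \<subseteq> G \<and> G \<subseteq> S" then show "G \<in> \<FF>" using X unfolding \<FF>_def by blast
  qed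
  have Bfb: "filter_base \<FF> \<BB>" unfolding filter_base_def
  proof (intro conjI ballI)
    show "\<BB> \<subseteq> \<FF>" unfolding \<BB>_def by blast
    fix X assume X: "X \<in> \<FF>"
    then obtain A Os where d: "okdat \<O> A Os" "N A Os \<subseteq> X" unfolding \<FF>_def by blast
    have "N A Os \<in> \<BB>" unfolding \<BB>_def \<FF>_def using d(1) NS Nst by blast
    then show "\<exists>B\<in>\<BB>. B \<subseteq> X" using d(2) by blast
  qed
  have Bsc: "stable_coll M E smul \<BB>" unfolding stable_coll_def
  proof (intro conjI allI impI ballI)
    show "\<BB> \<noteq> {}" unfolding \<BB>_def using SF Sst by blast
    fix X assume "X \<in> \<BB>" then show "stable_set M E smul X" unfolding \<BB>_def by blast
  next
    fix B :: "nat \<Rightarrow> 'w set" and X :: "nat \<Rightarrow> 'e set" assume h: "meas_partition M B \<and> (\<forall>k. X k \<in> \<BB>)"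
    then have B: "meas_partition M B" and XB: "\<And>k. X k \<in> \<BB>" by auto
    have Bn: "\<And>n. B n \<in> sets M" using mp_sets[OF B] .
    have Xs: "\<And>k. stable_set M E smul (X k)" using XB unfolding \<BB>_def by blast
    have XS: "\<And>k. X k \<subseteq> S" using XB unfolding \<BB>_def \<FF>_def by blast
    have XE: "\<And>k. X k \<subseteq> E" using XS SE by blast
    have "\<forall>k. \<exists>p. okdat \<O> (fst p) (snd p) \<and> N (fst p) (snd p) \<subseteq> X k"
      using XB unfolding \<BB>_def \<FF>_def by force
    then obtain f where f: "\<And>k. okdat \<O> (fst (f k)) (snd (f k)) \<and> N (fst (f k)) (snd (f k)) \<subseteq> X k" by metis
    define A' where "A' = (\<lambda>k. fst (f k))"
    define Os' where "Os' = (\<lambda>k. snd (f k))"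
    have d: "\<And>k. okdat \<O> (A' k) (Os' k)" and dX: "\<And>k. N (A' k) (Os' k) \<subseteq> X k"
      using f unfolding A'_def Os'_def by auto
    note cmb = Odat_combine[OF Osc B d]
    define A'' where "A'' = refpart B A'"
    define Os'' where "Os'' = (\<lambda>m. Os' (fst (prod_decode m)) (snd (prod_decode m)))"
    have d'': "okdat \<O> A'' Os''" using cmb(1) unfolding A''_def Os''_def .
    have key: "N A'' Os'' \<subseteq> conc_sets E smul B X"
    proof
      fix z assume z: "z \<in> N A'' Os''"
      have zS: "z \<in> S" using z NS by blast
      have zE: "z \<in> E" using zS SE by blast
      have zn: "nowhere (Odat A'' Os'') z Q" using z unfolding N_def by blast
      have "\<forall>n. \<exists>y\<in>X n. eqon (B n) z y"
      proof
        fix n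
        obtain p where p: "p \<in> N (A' n) (Os' n)" using Nne[OF d[of n]] by blast
        have pS: "p \<in> S" using p NS by blast
        have pE: "p \<in> E" using pS SE by blast
        have pn: "nowhere (Odat (A' n) (Os' n)) p Q" using p unfolding N_def by blast
        define xs where "xs = (\<lambda>m::nat. if m = 0 then p else z)"
        have xsS: "\<And>m. xs m \<in> S" using pS zS unfolding xs_def by simp
        have xsE: "\<And>m. xs m \<in> E" using xsS SE by blast
        have P: "meas_partition M (part2 (B n))" by (rule part2_mp[OF Bn])
        define y where "y = conc E smul (part2 (B n)) xs"
        have yS: "y \<in> S" unfolding y_def by (rule stable_conc[OF Sst P xsS])
        have yE: "y \<in> E" using yS SE by blast
        have ey1: "eqon (B n) y z" using conc(2)[of "part2 (B n)" xs, OF P xsE, of "Suc 0"] unfolding y_def part2_1 xs_def by simp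
        have ey0: "eqon (space M - B n) y p" using conc(2)[of "part2 (B n)" xs, OF P xsE, of 0] unfolding y_def part2_0 xs_def by simp
        have "nowhere (Odat (A' n) (Os' n)) y Q" unfolding nowhere_def
        proof (intro ballI allI impI)
          fix W w D' assume W: "W \<in> Odat (A' n) (Os' n)" and w: "w \<in> W" and D': "D' \<in> sets M \<and> D' \<subseteq> Q \<and> eqon D' y w"
          have wE: "w \<in> E" using w OdE[OF d W] by blast
          have D's: "D' \<in> sets M" using D' by blast
          have eD: "eqon D' y w" using D' by blast
          have n0: "D' - B n \<in> null_sets M"
          proof -
            have s: "D' - B n \<in> sets M" using D's Bn by blast
            have "eqon (D' - B n) y p" by (rule eqon_sub[OF ey0 _ _ s yE pE]) (use D's sets.sets_into_space Bn in auto)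
            moreover have "eqon (D' - B n) y w" by (rule eqon_sub[OF eD _ D's s yE wE]) blast
            ultimately have "eqon (D' - B n) p w" unfolding eqon_def by simp
            then show ?thesis using pn W w s D' unfolding nowhere_def by blast
          qed
          have n1: "D' \<inter> B n \<in> null_sets M"
          proof -
            have s: "D' \<inter> B n \<in> sets M" using D's Bn by blast
            have "\<forall>m. \<exists>V. V \<in> Odat (A' m) (Os' m)" using Odat_ne[OF Osc d] by blast
            then obtain V0 where V0: "\<And>m. V0 m \<in> Odat (A' m) (Os' m)" by metis
            have "\<forall>m. \<exists>v. v \<in> V0 m" using V0 Odat_stable[OF Osc d] stable_ne by blast
            then obtain v0 where v0: "\<And>m. v0 m \<in> V0 m" by metis
            define Wf where "Wf = (\<lambda>m. if m = n then W else V0 m)"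
            define wf where "wf = (\<lambda>m. if m = n then w else v0 m)"
            have Wf: "\<And>m. Wf m \<in> Odat (A' m) (Os' m)" using W V0 unfolding Wf_def by simp
            have wf: "\<And>m. wf m \<in> Wf m" using w v0 unfolding Wf_def wf_def by simp
            have wfE: "\<And>m. wf m \<in> E" using wf OdE[OF d Wf] by blast
            define W' where "W' = conc_sets E smul B Wf"
            define w' where "w' = conc E smul B wf"
            have W'O: "W' \<in> Odat A'' Os''" unfolding W'_def A''_def Os''_def by (rule cmb(2)[OF Wf])
            have w'W: "w' \<in> W'" unfolding W'_def w'_def conc_sets_def using wf by blast
            have w'E: "w' \<in> E" unfolding w'_def by (rule conc(1)[OF B wfE])
            have ew: "eqon (B n) w' w" using conc(2)[of B wf, OF B wfE, of n] unfolding w'_def wf_def by simp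
            have "eqon (D' \<inter> B n) z y" by (rule eqon_sub[OF ey1[THEN eqon_sym] _ Bn s zE yE]) blast
            moreover have "eqon (D' \<inter> B n) y w" by (rule eqon_sub[OF eD _ D's s yE wE]) blast
            moreover have "eqon (D' \<inter> B n) w' w" by (rule eqon_sub[OF ew _ Bn s w'E wE]) blast
            ultimately have "eqon (D' \<inter> B n) z w'" unfolding eqon_def by simp
            then show ?thesis using zn W'O w'W s D' unfolding nowhere_def by blast
          qed
          have "D' = (D' \<inter> B n) \<union> (D' - B n)" by blast
          then show "D' \<in> null_sets M" using n0 n1 by (metis null_sets.Un)
        qed
        then have "y \<in> N (A' n) (Os' n)" unfolding N_def using yS by blast
        then have "y \<in> X n" using dX by blast
        then show "\<exists>y\<in>X n. eqon (B n) z y" using ey1 eqon_sym by blast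
      qed
      then show "z \<in> conc_sets E smul B X" unfolding conc_sets_char[OF B XE] using zE by blast
    qed
    have "conc_sets E smul B X \<in> \<FF>" unfolding \<FF>_def
      by (intro CollectI conjI conc_sets_S[of B X, OF B XS] exI[of _ A''] exI[of _ Os''] d'' key)
    moreover have "stable_set M E smul (conc_sets E smul B X)" by (rule conc_sets_stable[OF B Xs])
    ultimately show "conc_sets E smul B X \<in> \<BB>" unfolding \<BB>_def by blast
  qed
  have "stable_filter M E smul S \<FF>" unfolding stable_filter_def using Ffil Bsc Bfb by blast
  then obtain x where x: "x \<in> S" "cluster_point T \<FF> x" using i unfolding stable_compact_def by blast
  obtain V where V: "V \<in> \<O>" "x \<in> V" using x(1) Ocov by blast
  have Vs: "stable_set M E smul V" using sc_stable[OF Osc V(1)] .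
  have dV: "okdat \<O> triv (\<lambda>_. {V})" by (rule okdat_triv[OF V(1)])
  have "N triv (\<lambda>_. {V}) \<in> \<FF>" unfolding \<FF>_def
    by (intro CollectI conjI subset_refl exI[of _ triv] exI[of _ "\<lambda>_. {V}"] dV NS)
  then have "V \<inter> N triv (\<lambda>_. {V}) \<noteq> {}" using x(2) V Oop unfolding cluster_point_def by blast
  then obtain y where y: "y \<in> V" "y \<in> N triv (\<lambda>_. {V})" by blast
  have "nowhere {V} y Q" using y(2) unfolding N_def Odat_single[OF Vs] by blast
  moreover have "eqon Q y y" by simp
  ultimately have "Q \<in> null_sets M" using y(1) Qs unfolding nowhere_def by blast
  then show False using Qn by simp
qed

end


theorem proposition5:
  fixes M :: "'w measure" and E :: "'e set" and zero :: 'e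
    and add :: "'e \<Rightarrow> 'e \<Rightarrow> 'e" and smul :: "('w \<Rightarrow> real) \<Rightarrow> 'e \<Rightarrow> 'e"
    and S :: "'e set" and T :: "'e topology"
  assumes "prob_space M"
    and "stable_module M E zero add smul"
    and "stable_set M E smul S"
    and "topspace T = S"
    and "stable_topology M E smul T"
  shows "(stable_compact M E smul T S \<longleftrightarrow>
            (\<forall>\<F>. stable_ultrafilter M E smul S \<F> \<longrightarrow> (\<exists>x\<in>S. cluster_point T \<F> x)))
       \<and> (stable_compact M E smul T S \<longleftrightarrow>
            (\<forall>\<O>. stable_coll M E smul \<O> \<and> (\<forall>V\<in>\<O>. openin T V) \<and> S = \<Union>\<O> \<longrightarrow>
               (\<exists>\<O>'. stable_finite_sub M E smul \<O> \<O>' \<and> S = \<Union>\<O>')))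
       \<and> (stable_compact M E smul T S \<longleftrightarrow>
            (\<forall>\<C>. stable_coll M E smul \<C> \<and> (\<forall>C\<in>\<C>. closedin T C) \<and>
                  (\<forall>\<C>'. stable_finite_sub M E smul \<C> \<C>' \<longrightarrow> \<Inter>\<C>' \<noteq> {}) \<longrightarrow>
               \<Inter>\<C> \<noteq> {}))"
proof -
  obtain Bs where Bs: "stable_coll M E smul Bs" "\<forall>B\<in>Bs. openin T B"
    "\<forall>U. openin T U \<longrightarrow> (\<exists>\<U>\<subseteq>Bs. U = \<Union>\<U>)"
    using assms(5) unfolding stable_topology_def by blast
  interpret st: stabtop M E zero add smul S T Bs
    by (intro stabtop.intro stabmod.intro stabmod_axioms.intro stabtop_axioms.intro assms Bs(1)) (use Bs in auto)
  have 1: "stable_compact M E smul T S \<longleftrightarrow>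
            (\<forall>\<F>. stable_ultrafilter M E smul S \<F> \<longrightarrow> (\<exists>x\<in>S. cluster_point T \<F> x))"
  proof
    assume "stable_compact M E smul T S"
    then show "\<forall>\<F>. stable_ultrafilter M E smul S \<F> \<longrightarrow> (\<exists>x\<in>S. cluster_point T \<F> x)"
      unfolding stable_compact_def stable_ultrafilter_def by blast
  next
    assume "\<forall>\<F>. stable_ultrafilter M E smul S \<F> \<longrightarrow> (\<exists>x\<in>S. cluster_point T \<F> x)"
    then show "stable_compact M E smul T S" by (rule st.ii_imp_i)
  qed
  have 2: "stable_compact M E smul T S \<longleftrightarrow>
            (\<forall>\<O>. stable_coll M E smul \<O> \<and> (\<forall>V\<in>\<O>. openin T V) \<and> S = \<Union>\<O> \<longrightarrow>
               (\<exists>\<O>'. stable_finite_sub M E smul \<O> \<O>' \<and> S = \<Union>\<O>'))"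
  proof
    assume i: "stable_compact M E smul T S"
    show "\<forall>\<O>. stable_coll M E smul \<O> \<and> (\<forall>V\<in>\<O>. openin T V) \<and> S = \<Union>\<O> \<longrightarrow>
               (\<exists>\<O>'. stable_finite_sub M E smul \<O> \<O>' \<and> S = \<Union>\<O>')"
      using st.i_imp_iii[OF i] by blast
  next
    assume "\<forall>\<O>. stable_coll M E smul \<O> \<and> (\<forall>V\<in>\<O>. openin T V) \<and> S = \<Union>\<O> \<longrightarrow>
               (\<exists>\<O>'. stable_finite_sub M E smul \<O> \<O>' \<and> S = \<Union>\<O>')"
    then show "stable_compact M E smul T S" by (rule st.iii_imp_i)
  qed
  have 3: "stable_compact M E smul T S \<longleftrightarrow>
            (\<forall>\<C>. stable_coll M E smul \<C> \<and> (\<forall>C\<in>\<C>. closedin T C) \<and>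
                  (\<forall>\<C>'. stable_finite_sub M E smul \<C> \<C>' \<longrightarrow> \<Inter>\<C>' \<noteq> {}) \<longrightarrow>
               \<Inter>\<C> \<noteq> {})"
  proof
    assume i: "stable_compact M E smul T S"
    show "\<forall>\<C>. stable_coll M E smul \<C> \<and> (\<forall>C\<in>\<C>. closedin T C) \<and>
                  (\<forall>\<C>'. stable_finite_sub M E smul \<C> \<C>' \<longrightarrow> \<Inter>\<C>' \<noteq> {}) \<longrightarrow>
               \<Inter>\<C> \<noteq> {}"
      using st.i_imp_iv[OF i] by blast
  next
    assume "\<forall>\<C>. stable_coll M E smul \<C> \<and> (\<forall>C\<in>\<C>. closedin T C) \<and>
                  (\<forall>\<C>'. stable_finite_sub M E smul \<C> \<C>' \<longrightarrow> \<Inter>\<C>' \<noteq> {}) \<longrightarrow>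
               \<Inter>\<C> \<noteq> {}"
    then show "stable_compact M E smul T S" by (rule st.iv_imp_i)
  qed
  show ?thesis using 1 2 3 by blast
qed

end
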